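(* Let $\mathcal C$ be a small triangulated category with a tensor product that is exact in each variable and has a tensor identity $e$. Suppose either that the tensor product is commutative, or that there is an object $c\in\mathcal C$ such that no proper thick subcategory of $\mathcal C$ contains $c$. Then the set of thick tensor ideals of $\mathcal C$, ordered by inclusion and with product $(\mathcal D_1,\mathcal D_2)\mapsto\langle\mathcal D_1\mathcal D_2\rangle$, is an ideal lattice, and a thick tensor ideal is compact in this lattice if and only if it is of the form $\langle x\rangle$ for a single object $x$.
   Context: A tensor product on an additive category is an additive bifunctor $\otimes$ with a natural associativity isomorphism; a tensor identity $e$ has natural isomorphisms $x\otimes e\cong x\cong e\otimes x$ satisfying the pentagon and triangle axioms. A full subcategory $\mathcal D$ of a triangulated category is thick if it is a triangulated subcategory closed under direct summands. A tensor ideal is a full additive subcategory $\mathcal D$ with $x\otimes y\in\mathcal D$ whenever $x\in\mathcal D$ or $y\in\mathcal D$. $\langle\mathcal D_0\rangle$ is the smallest thick tensor ideal containing $\mathcal D_0$; $\mathcal D_1\mathcal D_2$ is the class of finite coproducts of objects $x\otimes y$, $x\in\mathcal D_1$, $y\in\mathcal D_2$. An ideal lattice is a poset $(L,\leq)$ with an associative multiplication such that: (L1) $L$ is a complete lattice; (L2) every element is a supremum of compact elements ($a$ is compact if $a\leq\sup A$ implies $a\leq\sup A'$ for some finite $A'\subseteq A$); (L3) multiplication distributes over binary joins on both sides; (L4) $1=\sup L$ is compact and is a two-sided identity; (L5) products of compact elements are compact. *)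

theory Defs
  imports Main
begin

section \<open>Data of a (small) tensor triangulated category\<close>

text \<open>Smallness is automatic: objects and
  morphisms form sets. comp g f is the composite g after f (defined when cod f = dom g).
  hzero x y is the zero morphism x to y, hadd/hneg the abelian group structure on hom sets.
  shift/shiftm is the suspension functor, tri the class of distinguished triangles
  (f,g,h) with f: x to y, g: y to z, h: z to shift x.  tens/tensm is the tensor product
  on objects/morphisms, assoc its associativity isomorphism, unit the tensor identity,
  lunit/runit the unit isomorphisms e tens x to x and x tens e to x.\<close>

record ('o, 'm) ttcat =
  Ob :: "'o set"
  Ar :: "'m set"
  dom :: "'m \<Rightarrow> 'o"
  cod :: "'m \<Rightarrow> 'o"
  comp :: "'m \<Rightarrow> 'm \<Rightarrow> 'm"
  idm :: "'o \<Rightarrow> 'm"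
  hadd :: "'m \<Rightarrow> 'm \<Rightarrow> 'm"
  hneg :: "'m \<Rightarrow> 'm"
  hzero :: "'o \<Rightarrow> 'o \<Rightarrow> 'm"
  shift :: "'o \<Rightarrow> 'o"
  shiftm :: "'m \<Rightarrow> 'm"
  tri :: "('m \<times> 'm \<times> 'm) set"
  tens :: "'o \<Rightarrow> 'o \<Rightarrow> 'o"
  tensm :: "'m \<Rightarrow> 'm \<Rightarrow> 'm"
  assoc :: "'o \<Rightarrow> 'o \<Rightarrow> 'o \<Rightarrow> 'm"
  unit :: "'o"
  lunit :: "'o \<Rightarrow> 'm"
  runit :: "'o \<Rightarrow> 'm"

definition hom :: "('o,'m,'z) ttcat_scheme \<Rightarrow> 'o \<Rightarrow> 'o \<Rightarrow> 'm set" where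
  "hom C x y = {f \<in> Ar C. dom C f = x \<and> cod C f = y}"

definition category :: "('o,'m,'z) ttcat_scheme \<Rightarrow> bool" where
  "category C \<longleftrightarrow>
     (\<forall>f\<in>Ar C. dom C f \<in> Ob C \<and> cod C f \<in> Ob C) \<and>
     (\<forall>x\<in>Ob C. idm C x \<in> hom C x x) \<and>
     (\<forall>x y z f g. f \<in> hom C x y \<longrightarrow> g \<in> hom C y z \<longrightarrow> comp C g f \<in> hom C x z) \<and>
     (\<forall>x y f. f \<in> hom C x y \<longrightarrow> comp C (idm C y) f = f \<and> comp C f (idm C x) = f) \<and>
     (\<forall>w x y z f g h. f \<in> hom C w x \<longrightarrow> g \<in> hom C x y \<longrightarrow> h \<in> hom C y z \<longrightarrow>
        comp C h (comp C g f) = comp C (comp C h g) f)"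

definition preadditive :: "('o,'m,'z) ttcat_scheme \<Rightarrow> bool" where
  "preadditive C \<longleftrightarrow> category C \<and>
     (\<forall>x\<in>Ob C. \<forall>y\<in>Ob C. hzero C x y \<in> hom C x y) \<and>
     (\<forall>x y f g. f \<in> hom C x y \<longrightarrow> g \<in> hom C x y \<longrightarrow>
        hadd C f g \<in> hom C x y \<and> hneg C f \<in> hom C x y \<and>
        hadd C f g = hadd C g f \<and> hadd C f (hzero C x y) = f \<and>
        hadd C f (hneg C f) = hzero C x y) \<and>
     (\<forall>x y f g h. f \<in> hom C x y \<longrightarrow> g \<in> hom C x y \<longrightarrow> h \<in> hom C x y \<longrightarrow>
        hadd C (hadd C f g) h = hadd C f (hadd C g h)) \<and>
     (\<forall>x y z f g h. f \<in> hom C x y \<longrightarrow> g \<in> hom C x y \<longrightarrow> h \<in> hom C y z \<longrightarrow>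
        comp C h (hadd C f g) = hadd C (comp C h f) (comp C h g)) \<and>
     (\<forall>w x y f g h. h \<in> hom C w x \<longrightarrow> f \<in> hom C x y \<longrightarrow> g \<in> hom C x y \<longrightarrow>
        comp C (hadd C f g) h = hadd C (comp C f h) (comp C g h))"

definition iso :: "('o,'m,'z) ttcat_scheme \<Rightarrow> 'm \<Rightarrow> 'o \<Rightarrow> 'o \<Rightarrow> bool" where
  "iso C f x y \<longleftrightarrow> f \<in> hom C x y \<and>
     (\<exists>g\<in>hom C y x. comp C g f = idm C x \<and> comp C f g = idm C y)"

definition zero_obj :: "('o,'m,'z) ttcat_scheme \<Rightarrow> 'o \<Rightarrow> bool" where
  "zero_obj C z \<longleftrightarrow> z \<in> Ob C \<and>
     (\<forall>x\<in>Ob C. hom C z x = {hzero C z x} \<and> hom C x z = {hzero C x z})"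

definition biprod :: "('o,'m,'z) ttcat_scheme \<Rightarrow> 'o \<Rightarrow> 'o \<Rightarrow> 'o \<Rightarrow> 'm \<Rightarrow> 'm \<Rightarrow> 'm \<Rightarrow> 'm \<Rightarrow> bool" where
  "biprod C x y s i1 i2 p1 p2 \<longleftrightarrow>
     x \<in> Ob C \<and> y \<in> Ob C \<and> s \<in> Ob C \<and>
     i1 \<in> hom C x s \<and> i2 \<in> hom C y s \<and> p1 \<in> hom C s x \<and> p2 \<in> hom C s y \<and>
     comp C p1 i1 = idm C x \<and> comp C p2 i2 = idm C y \<and>
     comp C p1 i2 = hzero C y x \<and> comp C p2 i1 = hzero C x y \<and>
     hadd C (comp C i1 p1) (comp C i2 p2) = idm C s"

definition additive :: "('o,'m,'z) ttcat_scheme \<Rightarrow> bool" where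
  "additive C \<longleftrightarrow> preadditive C \<and> (\<exists>z. zero_obj C z) \<and>
     (\<forall>x\<in>Ob C. \<forall>y\<in>Ob C. \<exists>s i1 i2 p1 p2. biprod C x y s i1 i2 p1 p2)"

definition endofunctor :: "('o,'m,'z) ttcat_scheme \<Rightarrow> ('o \<Rightarrow> 'o) \<Rightarrow> ('m \<Rightarrow> 'm) \<Rightarrow> bool" where
  "endofunctor C F Fm \<longleftrightarrow>
     (\<forall>x\<in>Ob C. F x \<in> Ob C \<and> Fm (idm C x) = idm C (F x)) \<and>
     (\<forall>x y f. f \<in> hom C x y \<longrightarrow> Fm f \<in> hom C (F x) (F y)) \<and>
     (\<forall>x y z f g. f \<in> hom C x y \<longrightarrow> g \<in> hom C y z \<longrightarrow> Fm (comp C g f) = comp C (Fm g) (Fm f))"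

definition additive_functor :: "('o,'m,'z) ttcat_scheme \<Rightarrow> ('o \<Rightarrow> 'o) \<Rightarrow> ('m \<Rightarrow> 'm) \<Rightarrow> bool" where
  "additive_functor C F Fm \<longleftrightarrow> endofunctor C F Fm \<and>
     (\<forall>x y f g. f \<in> hom C x y \<longrightarrow> g \<in> hom C x y \<longrightarrow> Fm (hadd C f g) = hadd C (Fm f) (Fm g))"

definition nat_iso :: "('o,'m,'z) ttcat_scheme \<Rightarrow> ('o \<Rightarrow> 'o) \<Rightarrow> ('m \<Rightarrow> 'm) \<Rightarrow>
    ('o \<Rightarrow> 'o) \<Rightarrow> ('m \<Rightarrow> 'm) \<Rightarrow> ('o \<Rightarrow> 'm) \<Rightarrow> bool" where
  "nat_iso C F Fm G Gm \<eta> \<longleftrightarrow>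
     (\<forall>x\<in>Ob C. iso C (\<eta> x) (F x) (G x)) \<and>
     (\<forall>x y f. f \<in> hom C x y \<longrightarrow> comp C (Gm f) (\<eta> x) = comp C (\<eta> y) (Fm f))"

definition autoequivalence :: "('o,'m,'z) ttcat_scheme \<Rightarrow> ('o \<Rightarrow> 'o) \<Rightarrow> ('m \<Rightarrow> 'm) \<Rightarrow> bool" where
  "autoequivalence C F Fm \<longleftrightarrow> additive_functor C F Fm \<and>
     (\<forall>x\<in>Ob C. \<forall>y\<in>Ob C. inj_on Fm (hom C x y) \<and> hom C (F x) (F y) \<subseteq> Fm ` hom C x y) \<and>
     (\<forall>y\<in>Ob C. \<exists>x\<in>Ob C. \<exists>f. iso C f (F x) y)"

definition triangle :: "('o,'m,'z) ttcat_scheme \<Rightarrow> 'm \<times> 'm \<times> 'm \<Rightarrow> bool" where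
  "triangle C t = (case t of (f, g, h) \<Rightarrow>
     f \<in> Ar C \<and> g \<in> Ar C \<and> h \<in> Ar C \<and> cod C f = dom C g \<and> cod C g = dom C h \<and>
     cod C h = shift C (dom C f))"

definition tri_mor :: "('o,'m,'z) ttcat_scheme \<Rightarrow> 'm \<times> 'm \<times> 'm \<Rightarrow> 'm \<times> 'm \<times> 'm \<Rightarrow> 'm \<times> 'm \<times> 'm \<Rightarrow> bool" where
  "tri_mor C t t' m = (case t of (f, g, h) \<Rightarrow> case t' of (f', g', h') \<Rightarrow> case m of (u, v, w) \<Rightarrow>
     u \<in> hom C (dom C f) (dom C f') \<and> v \<in> hom C (dom C g) (dom C g') \<and>
     w \<in> hom C (dom C h) (dom C h') \<and>
     comp C v f = comp C f' u \<and> comp C w g = comp C g' v \<and>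
     comp C (shiftm C u) h = comp C h' w)"

definition triangulated :: "('o,'m,'z) ttcat_scheme \<Rightarrow> bool" where
  "triangulated C \<longleftrightarrow> additive C \<and> autoequivalence C (shift C) (shiftm C) \<and>
     (\<forall>t\<in>tri C. triangle C t) \<and>
     \<comment> \<open>TR1: closure under isomorphism of triangles\<close>
     (\<forall>t t' u v w. t \<in> tri C \<longrightarrow> triangle C t' \<longrightarrow> tri_mor C t t' (u, v, w) \<longrightarrow>
        iso C u (dom C u) (cod C u) \<longrightarrow> iso C v (dom C v) (cod C v) \<longrightarrow>
        iso C w (dom C w) (cod C w) \<longrightarrow> t' \<in> tri C) \<and>
     \<comment> \<open>TR1: x \<rightarrow> x \<rightarrow> 0 \<rightarrow> \<Sigma>x is distinguished\<close>
     (\<forall>x\<in>Ob C. \<forall>z. zero_obj C z \<longrightarrow> (idm C x, hzero C x z, hzero C z (shift C x)) \<in> tri C) \<and>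
     \<comment> \<open>TR1: every morphism is the base of a distinguished triangle\<close>
     (\<forall>f\<in>Ar C. \<exists>g h. (f, g, h) \<in> tri C) \<and>
     \<comment> \<open>TR2: rotation\<close>
     (\<forall>f g h. triangle C (f, g, h) \<longrightarrow>
        ((f, g, h) \<in> tri C \<longleftrightarrow> (g, h, hneg C (shiftm C f)) \<in> tri C)) \<and>
     \<comment> \<open>TR3: completion of morphisms of triangles\<close>
     (\<forall>f g h f' g' h' u v. (f, g, h) \<in> tri C \<longrightarrow> (f', g', h') \<in> tri C \<longrightarrow>
        u \<in> hom C (dom C f) (dom C f') \<longrightarrow> v \<in> hom C (cod C f) (cod C f') \<longrightarrow>
        comp C v f = comp C f' u \<longrightarrow> (\<exists>w. tri_mor C (f, g, h) (f', g', h') (u, v, w))) \<and>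
     \<comment> \<open>TR4: octahedral axiom\<close>
     (\<forall>u v j k l i m n. (u, j, k) \<in> tri C \<longrightarrow> (v, l, i) \<in> tri C \<longrightarrow>
        (comp C v u, m, n) \<in> tri C \<longrightarrow> cod C u = dom C v \<longrightarrow>
        (\<exists>f g. f \<in> hom C (cod C j) (cod C m) \<and> g \<in> hom C (cod C m) (cod C l) \<and>
           (f, g, comp C (shiftm C j) i) \<in> tri C \<and>
           comp C f j = comp C m v \<and> comp C n f = k \<and>
           comp C g m = l \<and> comp C i g = comp C (shiftm C u) n))"

definition exact_functor :: "('o,'m,'z) ttcat_scheme \<Rightarrow> ('o \<Rightarrow> 'o) \<Rightarrow> ('m \<Rightarrow> 'm) \<Rightarrow> bool" where
  "exact_functor C F Fm \<longleftrightarrow> additive_functor C F Fm \<and>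
     (\<exists>\<phi>. nat_iso C (F \<circ> shift C) (Fm \<circ> shiftm C) (shift C \<circ> F) (shiftm C \<circ> Fm) \<phi> \<and>
        (\<forall>f g h. (f, g, h) \<in> tri C \<longrightarrow>
           (Fm f, Fm g, comp C (\<phi> (dom C f)) (Fm h)) \<in> tri C))"

definition tensor_with_identity :: "('o,'m,'z) ttcat_scheme \<Rightarrow> bool" where
  "tensor_with_identity C \<longleftrightarrow>
     \<comment> \<open>bifunctor\<close>
     (\<forall>x\<in>Ob C. \<forall>y\<in>Ob C. tens C x y \<in> Ob C \<and> tensm C (idm C x) (idm C y) = idm C (tens C x y)) \<and>
     (\<forall>x y x' y' f g. f \<in> hom C x y \<longrightarrow> g \<in> hom C x' y' \<longrightarrow>
        tensm C f g \<in> hom C (tens C x x') (tens C y y')) \<and>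
     (\<forall>x y z x' y' z' f g f' g'. f \<in> hom C x y \<longrightarrow> g \<in> hom C y z \<longrightarrow>
        f' \<in> hom C x' y' \<longrightarrow> g' \<in> hom C y' z' \<longrightarrow>
        tensm C (comp C g f) (comp C g' f') = comp C (tensm C g g') (tensm C f f')) \<and>
     \<comment> \<open>additive in each variable\<close>
     (\<forall>x y f f' g. f \<in> hom C x y \<longrightarrow> f' \<in> hom C x y \<longrightarrow> g \<in> Ar C \<longrightarrow>
        tensm C (hadd C f f') g = hadd C (tensm C f g) (tensm C f' g) \<and>
        tensm C g (hadd C f f') = hadd C (tensm C g f) (tensm C g f')) \<and>
     \<comment> \<open>natural associativity isomorphism\<close>
     (\<forall>x\<in>Ob C. \<forall>y\<in>Ob C. \<forall>z\<in>Ob C.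
        iso C (assoc C x y z) (tens C (tens C x y) z) (tens C x (tens C y z))) \<and>
     (\<forall>x y z x' y' z' f g h. f \<in> hom C x x' \<longrightarrow> g \<in> hom C y y' \<longrightarrow> h \<in> hom C z z' \<longrightarrow>
        comp C (assoc C x' y' z') (tensm C (tensm C f g) h) =
        comp C (tensm C f (tensm C g h)) (assoc C x y z)) \<and>
     \<comment> \<open>tensor identity with natural unit isomorphisms\<close>
     unit C \<in> Ob C \<and>
     nat_iso C (tens C (unit C)) (tensm C (idm C (unit C))) id id (lunit C) \<and>
     nat_iso C (\<lambda>x. tens C x (unit C)) (\<lambda>f. tensm C f (idm C (unit C))) id id (runit C) \<and>
     \<comment> \<open>pentagon axiom\<close>
     (\<forall>w\<in>Ob C. \<forall>x\<in>Ob C. \<forall>y\<in>Ob C. \<forall>z\<in>Ob C.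
        comp C (tensm C (idm C w) (assoc C x y z))
          (comp C (assoc C w (tens C x y) z) (tensm C (assoc C w x y) (idm C z))) =
        comp C (assoc C w x (tens C y z)) (assoc C (tens C w x) y z)) \<and>
     \<comment> \<open>triangle axiom\<close>
     (\<forall>x\<in>Ob C. \<forall>y\<in>Ob C.
        comp C (tensm C (idm C x) (lunit C y)) (assoc C x (unit C) y) =
        tensm C (runit C x) (idm C y))"

definition tensor_triangulated :: "('o,'m,'z) ttcat_scheme \<Rightarrow> bool" where
  "tensor_triangulated C \<longleftrightarrow> triangulated C \<and> tensor_with_identity C \<and>
     \<comment> \<open>exact in each variable\<close>
     (\<forall>x\<in>Ob C. exact_functor C (tens C x) (tensm C (idm C x)) \<and>
                exact_functor C (\<lambda>y. tens C y x) (\<lambda>f. tensm C f (idm C x)))"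

definition tensor_commutative :: "('o,'m,'z) ttcat_scheme \<Rightarrow> bool" where
  "tensor_commutative C \<longleftrightarrow> (\<exists>\<gamma>.
     (\<forall>x\<in>Ob C. \<forall>y\<in>Ob C. iso C (\<gamma> x y) (tens C x y) (tens C y x)) \<and>
     (\<forall>x y x' y' f g. f \<in> hom C x x' \<longrightarrow> g \<in> hom C y y' \<longrightarrow>
        comp C (\<gamma> x' y') (tensm C f g) = comp C (tensm C g f) (\<gamma> x y)))"

definition thick :: "('o,'m,'z) ttcat_scheme \<Rightarrow> 'o set \<Rightarrow> bool" where
  "thick C D \<longleftrightarrow> D \<subseteq> Ob C \<and> (\<exists>z\<in>D. zero_obj C z) \<and>
     (\<forall>x\<in>Ob C. x \<in> D \<longleftrightarrow> shift C x \<in> D) \<and>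
     (\<forall>f g h. (f, g, h) \<in> tri C \<longrightarrow>
        ((dom C f \<in> D \<and> dom C g \<in> D \<longrightarrow> dom C h \<in> D) \<and>
         (dom C g \<in> D \<and> dom C h \<in> D \<longrightarrow> dom C f \<in> D) \<and>
         (dom C h \<in> D \<and> dom C f \<in> D \<longrightarrow> dom C g \<in> D))) \<and>
     (\<forall>x y s i1 i2 p1 p2. biprod C x y s i1 i2 p1 p2 \<longrightarrow> s \<in> D \<longrightarrow> x \<in> D)"

definition tensor_ideal :: "('o,'m,'z) ttcat_scheme \<Rightarrow> 'o set \<Rightarrow> bool" where
  "tensor_ideal C D \<longleftrightarrow> D \<subseteq> Ob C \<and> (\<exists>z\<in>D. zero_obj C z) \<and>
     (\<forall>x y s i1 i2 p1 p2. biprod C x y s i1 i2 p1 p2 \<longrightarrow> x \<in> D \<longrightarrow> y \<in> D \<longrightarrow> s \<in> D) \<and>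
     (\<forall>x\<in>Ob C. \<forall>y\<in>Ob C. x \<in> D \<or> y \<in> D \<longrightarrow> tens C x y \<in> D)"

definition thick_tensor_ideal :: "('o,'m,'z) ttcat_scheme \<Rightarrow> 'o set \<Rightarrow> bool" where
  "thick_tensor_ideal C D \<longleftrightarrow> thick C D \<and> tensor_ideal C D"

definition gen :: "('o,'m,'z) ttcat_scheme \<Rightarrow> 'o set \<Rightarrow> 'o set" where
  "gen C D0 = \<Inter>{D. thick_tensor_ideal C D \<and> D0 \<subseteq> D}"

inductive_set fin_coprods :: "('o,'m,'z) ttcat_scheme \<Rightarrow> 'o set \<Rightarrow> 'o set"
  for C :: "('o,'m,'z) ttcat_scheme" and S :: "'o set" where
  empty: "zero_obj C z \<Longrightarrow> z \<in> fin_coprods C S"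
| step: "a \<in> fin_coprods C S \<Longrightarrow> b \<in> S \<Longrightarrow> biprod C a b s i1 i2 p1 p2 \<Longrightarrow> s \<in> fin_coprods C S"

definition prod_cls :: "('o,'m,'z) ttcat_scheme \<Rightarrow> 'o set \<Rightarrow> 'o set \<Rightarrow> 'o set" where
  "prod_cls C D1 D2 = fin_coprods C {tens C x y | x y. x \<in> D1 \<and> y \<in> D2}"

section \<open>Ideal lattices\<close>

definition is_sup :: "'a set \<Rightarrow> ('a \<Rightarrow> 'a \<Rightarrow> bool) \<Rightarrow> 'a set \<Rightarrow> 'a \<Rightarrow> bool" where
  "is_sup L le A s \<longleftrightarrow> s \<in> L \<and> (\<forall>a\<in>A. le a s) \<and> (\<forall>u\<in>L. (\<forall>a\<in>A. le a u) \<longrightarrow> le s u)"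

definition compact_el :: "'a set \<Rightarrow> ('a \<Rightarrow> 'a \<Rightarrow> bool) \<Rightarrow> 'a \<Rightarrow> bool" where
  "compact_el L le a \<longleftrightarrow> a \<in> L \<and>
     (\<forall>A s. A \<subseteq> L \<longrightarrow> is_sup L le A s \<longrightarrow> le a s \<longrightarrow>
        (\<exists>A' s'. A' \<subseteq> A \<and> finite A' \<and> is_sup L le A' s' \<and> le a s'))"

definition ideal_lattice :: "'a set \<Rightarrow> ('a \<Rightarrow> 'a \<Rightarrow> bool) \<Rightarrow> ('a \<Rightarrow> 'a \<Rightarrow> 'a) \<Rightarrow> bool" where
  "ideal_lattice L le mul \<longleftrightarrow>
     \<comment> \<open>partial order\<close>
     (\<forall>a\<in>L. le a a) \<and>
     (\<forall>a\<in>L. \<forall>b\<in>L. le a b \<and> le b a \<longrightarrow> a = b) \<and>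
     (\<forall>a\<in>L. \<forall>b\<in>L. \<forall>c\<in>L. le a b \<and> le b c \<longrightarrow> le a c) \<and>
     \<comment> \<open>associative multiplication\<close>
     (\<forall>a\<in>L. \<forall>b\<in>L. mul a b \<in> L) \<and>
     (\<forall>a\<in>L. \<forall>b\<in>L. \<forall>c\<in>L. mul (mul a b) c = mul a (mul b c)) \<and>
     \<comment> \<open>(L1) complete lattice\<close>
     (\<forall>A. A \<subseteq> L \<longrightarrow> (\<exists>s. is_sup L le A s)) \<and>
     \<comment> \<open>(L2) every element is a supremum of compact elements\<close>
     (\<forall>a\<in>L. \<exists>A. A \<subseteq> {c. compact_el L le c} \<and> is_sup L le A a) \<and>
     \<comment> \<open>(L3) distributivity over binary joins\<close>
     (\<forall>a\<in>L. \<forall>b\<in>L. \<forall>c\<in>L. \<forall>s. is_sup L le {b, c} s \<longrightarrow>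
        is_sup L le {mul a b, mul a c} (mul a s) \<and> is_sup L le {mul b a, mul c a} (mul s a)) \<and>
     \<comment> \<open>(L4) the top element is compact and a two-sided identity\<close>
     (\<exists>t. is_sup L le L t \<and> compact_el L le t \<and> (\<forall>a\<in>L. mul t a = a \<and> mul a t = a)) \<and>
     \<comment> \<open>(L5) products of compact elements are compact\<close>
     (\<forall>a b. compact_el L le a \<longrightarrow> compact_el L le b \<longrightarrow> compact_el L le (mul a b))"

end

theory Submission
  imports Defs
begin

locale ttc =
  fixes C :: "('o, 'm) ttcat"
  assumes ttri: "tensor_triangulated C"
begin

lemma triang: "triangulated C" using ttri unfolding tensor_triangulated_def by blast
lemma addi: "additive C" using triang unfolding triangulated_def by blast
lemma pre: "preadditive C" using addi unfolding additive_def by blast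
lemma cat: "category C" using pre unfolding preadditive_def by blast
lemma twi: "tensor_with_identity C" using ttri unfolding tensor_triangulated_def by blast

lemma catD: "(\<forall>f\<in>Ar C. dom C f \<in> Ob C \<and> cod C f \<in> Ob C) \<and>
     (\<forall>x\<in>Ob C. idm C x \<in> hom C x x) \<and>
     (\<forall>x y z f g. f \<in> hom C x y \<longrightarrow> g \<in> hom C y z \<longrightarrow> comp C g f \<in> hom C x z) \<and>
     (\<forall>x y f. f \<in> hom C x y \<longrightarrow> comp C (idm C y) f = f \<and> comp C f (idm C x) = f) \<and>
     (\<forall>w x y z f g h. f \<in> hom C w x \<longrightarrow> g \<in> hom C x y \<longrightarrow> h \<in> hom C y z \<longrightarrow>
        comp C h (comp C g f) = comp C (comp C h g) f)"
  using cat unfolding category_def by (elim conjE) (intro conjI)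

lemma Ar_ob: "f \<in> Ar C \<Longrightarrow> dom C f \<in> Ob C \<and> cod C f \<in> Ob C"
  using catD by blast
lemma hom_D: "f \<in> hom C x y \<Longrightarrow> x \<in> Ob C \<and> y \<in> Ob C \<and> f \<in> Ar C \<and> dom C f = x \<and> cod C f = y"
  using Ar_ob unfolding hom_def by auto
lemma Ar_hom: "f \<in> Ar C \<Longrightarrow> f \<in> hom C (dom C f) (cod C f)"
  unfolding hom_def by auto
lemma idm_hom: "x \<in> Ob C \<Longrightarrow> idm C x \<in> hom C x x"
  using catD by blast
lemma comp_hom: "f \<in> hom C x y \<Longrightarrow> g \<in> hom C y z \<Longrightarrow> comp C g f \<in> hom C x z"
  using catD[THEN conjunct2, THEN conjunct2, THEN conjunct1, rule_format] by blast
lemma comp_id: "f \<in> hom C x y \<Longrightarrow> comp C (idm C y) f = f \<and> comp C f (idm C x) = f"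
  using catD[THEN conjunct2, THEN conjunct2, THEN conjunct2, THEN conjunct1, rule_format] by blast
lemma comp_idl: "f \<in> hom C x y \<Longrightarrow> comp C (idm C y) f = f"
  using comp_id by blast
lemma comp_idr: "f \<in> hom C x y \<Longrightarrow> comp C f (idm C x) = f"
  using comp_id by blast
lemma comp_assoc: "f \<in> hom C w x \<Longrightarrow> g \<in> hom C x y \<Longrightarrow> h \<in> hom C y z \<Longrightarrow>
        comp C h (comp C g f) = comp C (comp C h g) f"
  using catD[THEN conjunct2, THEN conjunct2, THEN conjunct2, THEN conjunct2, rule_format] by blast
lemma preD: "(\<forall>x\<in>Ob C. \<forall>y\<in>Ob C. hzero C x y \<in> hom C x y) \<and>
     (\<forall>x y f g. f \<in> hom C x y \<longrightarrow> g \<in> hom C x y \<longrightarrow>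
        hadd C f g \<in> hom C x y \<and> hneg C f \<in> hom C x y \<and>
        hadd C f g = hadd C g f \<and> hadd C f (hzero C x y) = f \<and>
        hadd C f (hneg C f) = hzero C x y) \<and>
     (\<forall>x y f g h. f \<in> hom C x y \<longrightarrow> g \<in> hom C x y \<longrightarrow> h \<in> hom C x y \<longrightarrow>
        hadd C (hadd C f g) h = hadd C f (hadd C g h)) \<and>
     (\<forall>x y z f g h. f \<in> hom C x y \<longrightarrow> g \<in> hom C x y \<longrightarrow> h \<in> hom C y z \<longrightarrow>
        comp C h (hadd C f g) = hadd C (comp C h f) (comp C h g))"
  using pre unfolding preadditive_def by (elim conjE) (intro conjI)

lemma hzero_hom: "x \<in> Ob C \<Longrightarrow> y \<in> Ob C \<Longrightarrow> hzero C x y \<in> hom C x y"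
  using preD by blast
lemma pre2: assumes "f \<in> hom C x y" "g \<in> hom C x y"
  shows "hadd C f g \<in> hom C x y \<and> hneg C f \<in> hom C x y \<and>
        hadd C f g = hadd C g f \<and> hadd C f (hzero C x y) = f \<and>
        hadd C f (hneg C f) = hzero C x y"
  using preD[THEN conjunct2, THEN conjunct1, rule_format, OF assms] .
lemma hadd_hom: "f \<in> hom C x y \<Longrightarrow> g \<in> hom C x y \<Longrightarrow> hadd C f g \<in> hom C x y"
  using pre2 by blast
lemma hneg_hom: "f \<in> hom C x y \<Longrightarrow> hneg C f \<in> hom C x y"
  using pre2 by blast
lemma hadd_comm: "f \<in> hom C x y \<Longrightarrow> g \<in> hom C x y \<Longrightarrow> hadd C f g = hadd C g f"
  using pre2 by blast
lemma hadd_zero: "f \<in> hom C x y \<Longrightarrow> hadd C f (hzero C x y) = f"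
  using pre2 by blast
lemma hadd_neg: "f \<in> hom C x y \<Longrightarrow> hadd C f (hneg C f) = hzero C x y"
  using pre2 by blast
lemma hadd_assoc: "f \<in> hom C x y \<Longrightarrow> g \<in> hom C x y \<Longrightarrow> h \<in> hom C x y \<Longrightarrow>
        hadd C (hadd C f g) h = hadd C f (hadd C g h)"
  using preD[THEN conjunct2, THEN conjunct2, THEN conjunct1, rule_format] by blast
lemma comp_hadd: "f \<in> hom C x y \<Longrightarrow> g \<in> hom C x y \<Longrightarrow> h \<in> hom C y z \<Longrightarrow>
        comp C h (hadd C f g) = hadd C (comp C h f) (comp C h g)"
  using preD[THEN conjunct2, THEN conjunct2, THEN conjunct2, rule_format] by blast

lemma self_add: assumes "a \<in> hom C x y" "hadd C a a = a" shows "a = hzero C x y"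
proof -
  have n: "hneg C a \<in> hom C x y" using assms hneg_hom by blast
  have "hadd C (hadd C a a) (hneg C a) = hadd C a (hadd C a (hneg C a))"
    using hadd_assoc[OF assms(1) assms(1) n] .
  also have "\<dots> = a" using hadd_neg[OF assms(1)] hadd_zero[OF assms(1)] by simp
  finally show ?thesis using assms(2) hadd_neg[OF assms(1)] by simp
qed

lemma comp_zero_r: assumes "g \<in> hom C y w" "x \<in> Ob C"
  shows "comp C g (hzero C x y) = hzero C x w"
proof -
  have y: "y \<in> Ob C" using assms hom_D by blast
  have z: "hzero C x y \<in> hom C x y" using hzero_hom y assms by blast
  have zz: "hadd C (hzero C x y) (hzero C x y) = hzero C x y" using hadd_zero[OF z] .
  have c: "comp C g (hzero C x y) \<in> hom C x w" using comp_hom z assms by blast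
  have "comp C g (hzero C x y) = hadd C (comp C g (hzero C x y)) (comp C g (hzero C x y))"
    using comp_hadd[OF z z assms(1)] zz by simp
  then show ?thesis using self_add[OF c] by simp
qed

lemma zero_homs: "zero_obj C z \<Longrightarrow> x \<in> Ob C \<Longrightarrow> hom C z x = {hzero C z x} \<and> hom C x z = {hzero C x z}"
  unfolding zero_obj_def by blast

lemma ex_zero: "\<exists>z. zero_obj C z" using addi unfolding additive_def by blast
lemma zero_ob: "zero_obj C z \<Longrightarrow> z \<in> Ob C" unfolding zero_obj_def by blast

lemma ex_biprod: "x \<in> Ob C \<Longrightarrow> y \<in> Ob C \<Longrightarrow> \<exists>s i1 i2 p1 p2. biprod C x y s i1 i2 p1 p2"
  using addi unfolding additive_def by blast

lemma biprod_swap: "biprod C x y s i1 i2 p1 p2 \<Longrightarrow> biprod C y x s i2 i1 p2 p1"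
proof -
  assume b: "biprod C x y s i1 i2 p1 p2"
  then have "i1 \<in> hom C x s" "i2 \<in> hom C y s" "p1 \<in> hom C s x" "p2 \<in> hom C s y"
    unfolding biprod_def by blast+
  then have "hadd C (comp C i1 p1) (comp C i2 p2) = hadd C (comp C i2 p2) (comp C i1 p1)"
    using hadd_comm comp_hom by meson
  with b show ?thesis unfolding biprod_def by (elim conjE) (intro conjI; simp)
qed

lemma biprod_obs: "biprod C x y s i1 i2 p1 p2 \<Longrightarrow> x \<in> Ob C \<and> y \<in> Ob C \<and> s \<in> Ob C"
  unfolding biprod_def by blast

lemma thick_sub: "thick C D \<Longrightarrow> D \<subseteq> Ob C" unfolding thick_def by blast
lemma thick_zero: "thick C D \<Longrightarrow> \<exists>z\<in>D. zero_obj C z" unfolding thick_def by blast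
lemma thick_shift: "thick C D \<Longrightarrow> x \<in> Ob C \<Longrightarrow> x \<in> D \<longleftrightarrow> shift C x \<in> D"
  unfolding thick_def by blast
lemma thick_tri: "thick C D \<Longrightarrow> (f, g, h) \<in> tri C \<Longrightarrow>
        (dom C f \<in> D \<and> dom C g \<in> D \<longrightarrow> dom C h \<in> D) \<and>
         (dom C g \<in> D \<and> dom C h \<in> D \<longrightarrow> dom C f \<in> D) \<and>
         (dom C h \<in> D \<and> dom C f \<in> D \<longrightarrow> dom C g \<in> D)"
  unfolding thick_def by blast
lemma thick_summand: "thick C D \<Longrightarrow> biprod C x y s i1 i2 p1 p2 \<Longrightarrow> s \<in> D \<Longrightarrow> x \<in> D"
  unfolding thick_def by blast
lemma thick_intro:
  assumes "D \<subseteq> Ob C" "\<exists>z\<in>D. zero_obj C z" "\<And>x. x \<in> Ob C \<Longrightarrow> x \<in> D \<longleftrightarrow> shift C x \<in> D"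
   "\<And>f g h. (f, g, h) \<in> tri C \<Longrightarrow>
        (dom C f \<in> D \<and> dom C g \<in> D \<longrightarrow> dom C h \<in> D) \<and>
         (dom C g \<in> D \<and> dom C h \<in> D \<longrightarrow> dom C f \<in> D) \<and>
         (dom C h \<in> D \<and> dom C f \<in> D \<longrightarrow> dom C g \<in> D)"
   "\<And>x y s i1 i2 p1 p2. biprod C x y s i1 i2 p1 p2 \<Longrightarrow> s \<in> D \<Longrightarrow> x \<in> D"
  shows "thick C D"
  unfolding thick_def using assms by blast

lemma single_eq: "a \<in> hom C x y \<Longrightarrow> b \<in> hom C x y \<Longrightarrow> hom C x y = {c} \<Longrightarrow> a = b"
  by simp

lemma iso_closed: assumes "thick C D" "x \<in> D" "iso C f x y" shows "y \<in> D"
proof -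
  obtain g where f: "f \<in> hom C x y" and g: "g \<in> hom C y x" and gf: "comp C g f = idm C x"
    and fg: "comp C f g = idm C y" using assms(3) unfolding iso_def by blast
  obtain z where z: "zero_obj C z" using ex_zero by blast
  have zo: "z \<in> Ob C" using z zero_ob by blast
  have xo: "x \<in> Ob C" and yo: "y \<in> Ob C" using f hom_D by auto
  have zx: "hzero C z x \<in> hom C z x" and xz: "hzero C x z \<in> hom C x z"
    using hzero_hom xo zo by auto
  have zy: "hzero C z y \<in> hom C z y" and yz: "hzero C y z \<in> hom C y z"
    using hzero_hom yo zo by auto
  have e1: "comp C (hzero C x z) (hzero C z x) = idm C z"
    by (rule single_eq[OF comp_hom[OF zx xz] idm_hom[OF zo]]) (use zero_homs[OF z zo] in blast)
  have e2: "comp C f (hzero C z x) = hzero C z y"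
    by (rule single_eq[OF comp_hom[OF zx f] zy]) (use zero_homs[OF z yo] in blast)
  have e3: "comp C (hzero C x z) g = hzero C y z"
    by (rule single_eq[OF comp_hom[OF g xz] yz]) (use zero_homs[OF z yo] in blast)
  have "comp C (hzero C z x) (hzero C x z) = hzero C x x"
    using comp_zero_r[OF zx xo] .
  then have e4: "hadd C (comp C g f) (comp C (hzero C z x) (hzero C x z)) = idm C x"
    using gf hadd_zero[OF idm_hom[OF xo]] by simp
  have b: "biprod C y z x g (hzero C z x) f (hzero C x z)"
    unfolding biprod_def using e1 e2 e3 e4 xo yo zo f g fg zx xz by simp
  show ?thesis using thick_summand[OF assms(1) b assms(2)] .
qed

lemma zero_iso: assumes "zero_obj C z" "zero_obj C z'" shows "iso C (hzero C z z') z z'"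
proof -
  have zo: "z \<in> Ob C" "z' \<in> Ob C" using assms zero_ob by auto
  have a: "hzero C z z' \<in> hom C z z'" and b: "hzero C z' z \<in> hom C z' z" using hzero_hom zo by auto
  have "comp C (hzero C z' z) (hzero C z z') = idm C z"
    by (rule single_eq[OF comp_hom[OF a b] idm_hom[OF zo(1)]]) (use zero_homs[OF assms(1) zo(1)] in blast)
  moreover have "comp C (hzero C z z') (hzero C z' z) = idm C z'"
    by (rule single_eq[OF comp_hom[OF b a] idm_hom[OF zo(2)]]) (use zero_homs[OF assms(2) zo(2)] in blast)
  ultimately show ?thesis unfolding iso_def using a b by blast
qed

lemma zero_in_thick: assumes "thick C D" "zero_obj C z'" shows "z' \<in> D"
proof -
  obtain z where "z \<in> D" "zero_obj C z" using assms unfolding thick_def by blast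
  then show ?thesis using iso_closed[OF assms(1)] zero_iso assms(2) by blast
qed




lemma ttidD: "thick_tensor_ideal C D \<Longrightarrow> thick C D"
  unfolding thick_tensor_ideal_def by blast
lemma ttid_bp: "thick_tensor_ideal C D \<Longrightarrow> biprod C x y s i1 i2 p1 p2 \<Longrightarrow> x \<in> D \<Longrightarrow> y \<in> D \<Longrightarrow> s \<in> D"
  unfolding thick_tensor_ideal_def tensor_ideal_def by blast
lemma ttid_tl: "thick_tensor_ideal C D \<Longrightarrow> x \<in> D \<Longrightarrow> y \<in> Ob C \<Longrightarrow> tens C x y \<in> D"
  unfolding thick_tensor_ideal_def tensor_ideal_def by blast
lemma ttid_tr: "thick_tensor_ideal C D \<Longrightarrow> x \<in> Ob C \<Longrightarrow> y \<in> D \<Longrightarrow> tens C x y \<in> D"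
  unfolding thick_tensor_ideal_def tensor_ideal_def by blast
lemma ttid_sub: "thick_tensor_ideal C D \<Longrightarrow> D \<subseteq> Ob C"
  unfolding thick_tensor_ideal_def tensor_ideal_def by blast
lemma ttid_intro: assumes "thick C D"
  "\<And>x y s i1 i2 p1 p2. biprod C x y s i1 i2 p1 p2 \<Longrightarrow> x \<in> D \<Longrightarrow> y \<in> D \<Longrightarrow> s \<in> D"
  "\<And>x y. x \<in> D \<Longrightarrow> y \<in> Ob C \<Longrightarrow> tens C x y \<in> D"
  "\<And>x y. x \<in> Ob C \<Longrightarrow> y \<in> D \<Longrightarrow> tens C x y \<in> D"
  shows "thick_tensor_ideal C D"
proof -
  have "D \<subseteq> Ob C" "\<exists>z\<in>D. zero_obj C z" using thick_sub thick_zero assms(1) by auto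
  then show ?thesis unfolding thick_tensor_ideal_def tensor_ideal_def using assms by blast
qed

lemma twiD: "(\<forall>x\<in>Ob C. \<forall>y\<in>Ob C. tens C x y \<in> Ob C \<and> tensm C (idm C x) (idm C y) = idm C (tens C x y)) \<and>
     (\<forall>x y x' y' f g. f \<in> hom C x y \<longrightarrow> g \<in> hom C x' y' \<longrightarrow>
        tensm C f g \<in> hom C (tens C x x') (tens C y y')) \<and>
     (\<forall>x y z x' y' z' f g f' g'. f \<in> hom C x y \<longrightarrow> g \<in> hom C y z \<longrightarrow>
        f' \<in> hom C x' y' \<longrightarrow> g' \<in> hom C y' z' \<longrightarrow>
        tensm C (comp C g f) (comp C g' f') = comp C (tensm C g g') (tensm C f f')) \<and>
     (\<forall>x\<in>Ob C. \<forall>y\<in>Ob C. \<forall>z\<in>Ob C.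
        iso C (assoc C x y z) (tens C (tens C x y) z) (tens C x (tens C y z))) \<and>
     unit C \<in> Ob C \<and>
     nat_iso C (tens C (unit C)) (tensm C (idm C (unit C))) id id (lunit C) \<and>
     nat_iso C (\<lambda>x. tens C x (unit C)) (\<lambda>f. tensm C f (idm C (unit C))) id id (runit C)"
  using twi unfolding tensor_with_identity_def by (elim conjE) (intro conjI)

lemma tens_ob: "x \<in> Ob C \<Longrightarrow> y \<in> Ob C \<Longrightarrow> tens C x y \<in> Ob C"
  using twiD[THEN conjunct1] by blast
lemma tens_idm: "x \<in> Ob C \<Longrightarrow> y \<in> Ob C \<Longrightarrow> tensm C (idm C x) (idm C y) = idm C (tens C x y)"
  using twiD[THEN conjunct1] by blast
lemma tensm_hom: "f \<in> hom C x y \<Longrightarrow> g \<in> hom C x' y' \<Longrightarrow> tensm C f g \<in> hom C (tens C x x') (tens C y y')"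
  using twiD[THEN conjunct2, THEN conjunct1, rule_format] by blast
lemma tensm_comp: "f \<in> hom C x y \<Longrightarrow> g \<in> hom C y z \<Longrightarrow>
        f' \<in> hom C x' y' \<Longrightarrow> g' \<in> hom C y' z' \<Longrightarrow>
        tensm C (comp C g f) (comp C g' f') = comp C (tensm C g g') (tensm C f f')"
  using twiD[THEN conjunct2, THEN conjunct2, THEN conjunct1, rule_format] by blast
lemma assoc_iso: "x \<in> Ob C \<Longrightarrow> y \<in> Ob C \<Longrightarrow> z \<in> Ob C \<Longrightarrow>
        iso C (assoc C x y z) (tens C (tens C x y) z) (tens C x (tens C y z))"
  using twiD by blast
lemma unit_ob: "unit C \<in> Ob C" using twiD by blast
lemma lunit_iso: "x \<in> Ob C \<Longrightarrow> iso C (lunit C x) (tens C (unit C) x) x"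
  using twiD unfolding nat_iso_def by auto
lemma runit_iso: "x \<in> Ob C \<Longrightarrow> iso C (runit C x) (tens C x (unit C)) x"
  using twiD unfolding nat_iso_def by auto

lemma iso_sym: "iso C f x y \<Longrightarrow> \<exists>g. iso C g y x"
  unfolding iso_def by blast
lemma iso_refl: "x \<in> Ob C \<Longrightarrow> iso C (idm C x) x x"
  unfolding iso_def using idm_hom comp_idl by blast
lemma iso_tens: assumes "iso C f x x'" "iso C g y y'" shows "iso C (tensm C f g) (tens C x y) (tens C x' y')"
proof -
  obtain f' where f: "f \<in> hom C x x'" and f': "f' \<in> hom C x' x" and ff: "comp C f' f = idm C x" "comp C f f' = idm C x'"
    using assms(1) unfolding iso_def by blast
  obtain g' where g: "g \<in> hom C y y'" and g': "g' \<in> hom C y' y" and gg: "comp C g' g = idm C y" "comp C g g' = idm C y'"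
    using assms(2) unfolding iso_def by blast
  have o: "x \<in> Ob C" "x' \<in> Ob C" "y \<in> Ob C" "y' \<in> Ob C" using f g hom_D by auto
  have "comp C (tensm C f' g') (tensm C f g) = idm C (tens C x y)"
    using tensm_comp[OF f f' g g'] ff gg tens_idm o by simp
  moreover have "comp C (tensm C f g) (tensm C f' g') = idm C (tens C x' y')"
    using tensm_comp[OF f' f g' g] ff gg tens_idm o by simp
  ultimately show ?thesis unfolding iso_def using tensm_hom[OF f g] tensm_hom[OF f' g'] by blast
qed

definition isob where "isob x y \<longleftrightarrow> (\<exists>f. iso C f x y)"

lemma isob_sym: "isob x y \<Longrightarrow> isob y x" unfolding isob_def using iso_sym by blast
lemma isob_refl: "x \<in> Ob C \<Longrightarrow> isob x x" unfolding isob_def using iso_refl by blast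
lemma isob_tens: "isob x x' \<Longrightarrow> isob y y' \<Longrightarrow> isob (tens C x y) (tens C x' y')"
  unfolding isob_def using iso_tens by blast
lemma isob_tensl: "isob x x' \<Longrightarrow> y \<in> Ob C \<Longrightarrow> isob (tens C x y) (tens C x' y)"
  using isob_tens isob_refl by blast
lemma isob_tensr: "x \<in> Ob C \<Longrightarrow> isob y y' \<Longrightarrow> isob (tens C x y) (tens C x y')"
  using isob_tens isob_refl by blast
lemma isob_assoc: "x \<in> Ob C \<Longrightarrow> y \<in> Ob C \<Longrightarrow> z \<in> Ob C \<Longrightarrow>
   isob (tens C (tens C x y) z) (tens C x (tens C y z))"
  unfolding isob_def using assoc_iso by blast
lemma isob_assoc': "x \<in> Ob C \<Longrightarrow> y \<in> Ob C \<Longrightarrow> z \<in> Ob C \<Longrightarrow>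
   isob (tens C x (tens C y z)) (tens C (tens C x y) z)"
  using isob_assoc isob_sym by blast
lemma isob_lunit: "x \<in> Ob C \<Longrightarrow> isob (tens C (unit C) x) x" unfolding isob_def using lunit_iso by blast
lemma isob_runit: "x \<in> Ob C \<Longrightarrow> isob (tens C x (unit C)) x" unfolding isob_def using runit_iso by blast
lemma isob_closed: "thick C D \<Longrightarrow> x \<in> D \<Longrightarrow> isob x y \<Longrightarrow> y \<in> D"
  unfolding isob_def using iso_closed by blast

lemma triD: "autoequivalence C (shift C) (shiftm C) \<and>
     (\<forall>t\<in>tri C. triangle C t) \<and>
     (\<forall>x\<in>Ob C. \<forall>z. zero_obj C z \<longrightarrow> (idm C x, hzero C x z, hzero C z (shift C x)) \<in> tri C) \<and>
     (\<forall>f g h. triangle C (f, g, h) \<longrightarrow>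
        ((f, g, h) \<in> tri C \<longleftrightarrow> (g, h, hneg C (shiftm C f)) \<in> tri C))"
  using triang unfolding triangulated_def by (elim conjE) (intro conjI)
lemma shift_auto: "autoequivalence C (shift C) (shiftm C)" using triD by blast
lemma tri_triangle: "t \<in> tri C \<Longrightarrow> triangle C t" using triD by blast
lemma tri_zero: "x \<in> Ob C \<Longrightarrow> zero_obj C z \<Longrightarrow> (idm C x, hzero C x z, hzero C z (shift C x)) \<in> tri C"
  using triD by blast
lemma tri_rot: "triangle C (f, g, h) \<Longrightarrow> (f, g, h) \<in> tri C \<Longrightarrow> (g, h, hneg C (shiftm C f)) \<in> tri C"
  using triD[THEN conjunct2, THEN conjunct2, THEN conjunct2, rule_format] by blast
lemma shift_ob: "x \<in> Ob C \<Longrightarrow> shift C x \<in> Ob C"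
  using shift_auto unfolding autoequivalence_def additive_functor_def endofunctor_def by blast
lemma tri_Ar: "(f, g, h) \<in> tri C \<Longrightarrow> f \<in> Ar C \<and> g \<in> Ar C \<and> h \<in> Ar C"
  using tri_triangle unfolding triangle_def by fastforce

lemma Ob_thick: "thick C (Ob C)"
proof (rule thick_intro)
  show "\<exists>z\<in>Ob C. zero_obj C z" using ex_zero zero_ob by blast
  show "x \<in> Ob C \<Longrightarrow> x \<in> Ob C \<longleftrightarrow> shift C x \<in> Ob C" for x using shift_ob by blast
  show "(f, g, h) \<in> tri C \<Longrightarrow>
        (dom C f \<in> Ob C \<and> dom C g \<in> Ob C \<longrightarrow> dom C h \<in> Ob C) \<and>
         (dom C g \<in> Ob C \<and> dom C h \<in> Ob C \<longrightarrow> dom C f \<in> Ob C) \<and>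
         (dom C h \<in> Ob C \<and> dom C f \<in> Ob C \<longrightarrow> dom C g \<in> Ob C)" for f g h
  proof -
    assume "(f, g, h) \<in> tri C"
    then have "f \<in> Ar C" "g \<in> Ar C" "h \<in> Ar C" using tri_Ar by auto
    then show ?thesis using Ar_ob by blast
  qed
qed (use biprod_obs in auto)

lemma Ob_ttid: "thick_tensor_ideal C (Ob C)"
  by (rule ttid_intro[OF Ob_thick]) (use biprod_obs tens_ob in auto)

lemma ttid_Inter: assumes "\<D> \<noteq> {}" "\<And>D. D \<in> \<D> \<Longrightarrow> thick_tensor_ideal C D"
  shows "thick_tensor_ideal C (\<Inter>\<D>)"
proof (rule ttid_intro)
  show "thick C (\<Inter>\<D>)"
  proof (rule thick_intro)
    show "\<Inter>\<D> \<subseteq> Ob C" using assms ttid_sub by blast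
    obtain z where z: "zero_obj C z" using ex_zero by blast
    then have "z \<in> \<Inter>\<D>" using zero_in_thick assms(2) ttidD by blast
    then show "\<exists>z\<in>\<Inter>\<D>. zero_obj C z" using z by blast
    show "x \<in> Ob C \<Longrightarrow> x \<in> \<Inter>\<D> \<longleftrightarrow> shift C x \<in> \<Inter>\<D>" for x
      using thick_shift assms(2) ttidD by blast
    show "(f, g, h) \<in> tri C \<Longrightarrow>
        (dom C f \<in> \<Inter>\<D> \<and> dom C g \<in> \<Inter>\<D> \<longrightarrow> dom C h \<in> \<Inter>\<D>) \<and>
         (dom C g \<in> \<Inter>\<D> \<and> dom C h \<in> \<Inter>\<D> \<longrightarrow> dom C f \<in> \<Inter>\<D>) \<and>
         (dom C h \<in> \<Inter>\<D> \<and> dom C f \<in> \<Inter>\<D> \<longrightarrow> dom C g \<in> \<Inter>\<D>)" for f g h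
    proof -
      assume t: "(f, g, h) \<in> tri C"
      have "\<forall>D\<in>\<D>. (dom C f \<in> D \<and> dom C g \<in> D \<longrightarrow> dom C h \<in> D) \<and>
         (dom C g \<in> D \<and> dom C h \<in> D \<longrightarrow> dom C f \<in> D) \<and>
         (dom C h \<in> D \<and> dom C f \<in> D \<longrightarrow> dom C g \<in> D)"
        using thick_tri[OF _ t] assms(2) ttidD by blast
      then show ?thesis unfolding Inter_iff by blast
    qed
    show "biprod C x y s i1 i2 p1 p2 \<Longrightarrow> s \<in> \<Inter>\<D> \<Longrightarrow> x \<in> \<Inter>\<D>" for x y s i1 i2 p1 p2
      using thick_summand assms(2) ttidD by blast
  qed
  show "biprod C x y s i1 i2 p1 p2 \<Longrightarrow> x \<in> \<Inter>\<D> \<Longrightarrow> y \<in> \<Inter>\<D> \<Longrightarrow> s \<in> \<Inter>\<D>" for x y s i1 i2 p1 p2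
    using ttid_bp assms(2) by blast
  show "x \<in> \<Inter>\<D> \<Longrightarrow> y \<in> Ob C \<Longrightarrow> tens C x y \<in> \<Inter>\<D>" for x y
    using ttid_tl assms(2) by blast
  show "x \<in> Ob C \<Longrightarrow> y \<in> \<Inter>\<D> \<Longrightarrow> tens C x y \<in> \<Inter>\<D>" for x y
    using ttid_tr assms(2) by blast
qed

lemma gen_ttid: "X \<subseteq> Ob C \<Longrightarrow> thick_tensor_ideal C (gen C X)"
  unfolding gen_def by (rule ttid_Inter) (use Ob_ttid in auto)
lemma gen_least: "thick_tensor_ideal C D \<Longrightarrow> X \<subseteq> D \<Longrightarrow> gen C X \<subseteq> D"
  unfolding gen_def by blast
lemma gen_incl: "X \<subseteq> gen C X"
  unfolding gen_def by blast
lemma gen_mono: "X \<subseteq> Y \<Longrightarrow> gen C X \<subseteq> gen C Y"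
  unfolding gen_def by blast
lemma gen_id: "thick_tensor_ideal C D \<Longrightarrow> gen C D = D"
  using gen_least gen_incl by blast
lemma gen_sub: "X \<subseteq> Ob C \<Longrightarrow> gen C X \<subseteq> Ob C"
  using gen_least Ob_ttid by blast




definition pres :: "('o \<Rightarrow> 'o) \<Rightarrow> bool" where
 "pres F \<longleftrightarrow> (\<forall>x\<in>Ob C. F x \<in> Ob C) \<and>
   (\<forall>f g h. (f,g,h) \<in> tri C \<longrightarrow> (\<exists>f' g' h'. (f',g',h') \<in> tri C \<and> dom C f' = F (dom C f) \<and>
        dom C g' = F (dom C g) \<and> dom C h' = F (dom C h))) \<and>
   (\<forall>x y s i1 i2 p1 p2. biprod C x y s i1 i2 p1 p2 \<longrightarrow> (\<exists>j1 j2 q1 q2. biprod C (F x) (F y) (F s) j1 j2 q1 q2))"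

lemma pres_ob: "pres F \<Longrightarrow> x \<in> Ob C \<Longrightarrow> F x \<in> Ob C" unfolding pres_def by blast
lemma pres_tri: "pres F \<Longrightarrow> (f,g,h) \<in> tri C \<Longrightarrow> \<exists>f' g' h'. (f',g',h') \<in> tri C \<and> dom C f' = F (dom C f) \<and>
        dom C g' = F (dom C g) \<and> dom C h' = F (dom C h)"
  unfolding pres_def by blast
lemma pres_bp: "pres F \<Longrightarrow> biprod C x y s i1 i2 p1 p2 \<Longrightarrow> \<exists>j1 j2 q1 q2. biprod C (F x) (F y) (F s) j1 j2 q1 q2"
  unfolding pres_def by blast

lemma pres_comp: assumes "pres F" "pres G" shows "pres (\<lambda>x. G (F x))"
  unfolding pres_def
proof (intro conjI allI impI ballI)
  show "x \<in> Ob C \<Longrightarrow> G (F x) \<in> Ob C" for x using pres_ob assms by blast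
  show "\<exists>f' g' h'. (f', g', h') \<in> tri C \<and> dom C f' = G (F (dom C f)) \<and> dom C g' = G (F (dom C g)) \<and> dom C h' = G (F (dom C h))"
    if t: "(f, g, h) \<in> tri C" for f g h
  proof -
    obtain f1 g1 h1 where 1: "(f1,g1,h1) \<in> tri C" "dom C f1 = F (dom C f)" "dom C g1 = F (dom C g)" "dom C h1 = F (dom C h)"
      using pres_tri[OF assms(1) t] by blast
    obtain f2 g2 h2 where 2: "(f2,g2,h2) \<in> tri C" "dom C f2 = G (dom C f1)" "dom C g2 = G (dom C g1)" "dom C h2 = G (dom C h1)"
      using pres_tri[OF assms(2) 1(1)] by blast
    show ?thesis using 1 2 by metis
  qed
  show "\<exists>j1 j2 q1 q2. biprod C (G (F x)) (G (F y)) (G (F s)) j1 j2 q1 q2"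
    if "biprod C x y s i1 i2 p1 p2" for x y s i1 i2 p1 p2
    using pres_bp[OF assms(1) that] pres_bp[OF assms(2)] by blast
qed

lemma Fm_hzero: assumes "additive_functor C F Fm" "x \<in> Ob C" "y \<in> Ob C"
  shows "Fm (hzero C x y) = hzero C (F x) (F y)"
proof -
  have z: "hzero C x y \<in> hom C x y" using hzero_hom assms by blast
  have h: "Fm (hzero C x y) \<in> hom C (F x) (F y)" using assms(1) z unfolding additive_functor_def endofunctor_def by blast
  have "Fm (hadd C (hzero C x y) (hzero C x y)) = hadd C (Fm (hzero C x y)) (Fm (hzero C x y))"
    using assms(1) z unfolding additive_functor_def by blast
  then have "hadd C (Fm (hzero C x y)) (Fm (hzero C x y)) = Fm (hzero C x y)"
    using hadd_zero[OF z] by simp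
  then show ?thesis using self_add[OF h] by blast
qed

lemma exact_pres: assumes "exact_functor C F Fm" shows "pres F"
proof -
  have af: "additive_functor C F Fm" using assms unfolding exact_functor_def by blast
  have ef: "endofunctor C F Fm" using af unfolding additive_functor_def by blast
  have ob: "\<And>x. x \<in> Ob C \<Longrightarrow> F x \<in> Ob C" and fid: "\<And>x. x \<in> Ob C \<Longrightarrow> Fm (idm C x) = idm C (F x)"
    using ef unfolding endofunctor_def by auto
  have fh: "\<And>x y f. f \<in> hom C x y \<Longrightarrow> Fm f \<in> hom C (F x) (F y)"
    using ef unfolding endofunctor_def by blast
  have fc: "\<And>x y z f g. f \<in> hom C x y \<Longrightarrow> g \<in> hom C y z \<Longrightarrow> Fm (comp C g f) = comp C (Fm g) (Fm f)"
    using ef unfolding endofunctor_def by blast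
  have fa: "\<And>x y f g. f \<in> hom C x y \<Longrightarrow> g \<in> hom C x y \<Longrightarrow> Fm (hadd C f g) = hadd C (Fm f) (Fm g)"
    using af unfolding additive_functor_def by blast
  obtain \<phi> where ni: "nat_iso C (F \<circ> shift C) (Fm \<circ> shiftm C) (shift C \<circ> F) (shiftm C \<circ> Fm) \<phi>"
    and tr: "\<And>f g h. (f, g, h) \<in> tri C \<Longrightarrow> (Fm f, Fm g, comp C (\<phi> (dom C f)) (Fm h)) \<in> tri C"
    using assms unfolding exact_functor_def by blast
  have phi: "\<And>x. x \<in> Ob C \<Longrightarrow> \<phi> x \<in> hom C (F (shift C x)) (shift C (F x))"
    using ni unfolding nat_iso_def iso_def by auto
  show ?thesis unfolding pres_def
  proof (intro conjI allI impI ballI)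
    show "x \<in> Ob C \<Longrightarrow> F x \<in> Ob C" for x using ob .
    show "\<exists>f' g' h'. (f', g', h') \<in> tri C \<and> dom C f' = F (dom C f) \<and> dom C g' = F (dom C g) \<and> dom C h' = F (dom C h)"
      if t: "(f, g, h) \<in> tri C" for f g h
    proof -
      have tg: "triangle C (f, g, h)" using tri_triangle t by blast
      then have a: "f \<in> Ar C" "g \<in> Ar C" "h \<in> Ar C" "cod C h = shift C (dom C f)" unfolding triangle_def by auto
      have hf: "f \<in> hom C (dom C f) (cod C f)" "g \<in> hom C (dom C g) (cod C g)"
        using Ar_hom a by auto
      have "h \<in> hom C (dom C h) (shift C (dom C f))"
        using Ar_hom[OF a(3)] a(4) by simp
      note hf = hf this
      have d1: "dom C (Fm f) = F (dom C f)" using fh[OF hf(1)] hom_D by blast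
      have d2: "dom C (Fm g) = F (dom C g)" using fh[OF hf(2)] hom_D by blast
      have "comp C (\<phi> (dom C f)) (Fm h) \<in> hom C (F (dom C h)) (shift C (F (dom C f)))"
        using comp_hom[OF fh[OF hf(3)] phi] Ar_ob a by blast
      then have d3: "dom C (comp C (\<phi> (dom C f)) (Fm h)) = F (dom C h)" using hom_D by blast
      show ?thesis using tr[OF t] d1 d2 d3 by blast
    qed
    show "\<exists>j1 j2 q1 q2. biprod C (F x) (F y) (F s) j1 j2 q1 q2"
      if b: "biprod C x y s i1 i2 p1 p2" for x y s i1 i2 p1 p2
    proof -
      have o: "x \<in> Ob C" "y \<in> Ob C" "s \<in> Ob C" and hs: "i1 \<in> hom C x s" "i2 \<in> hom C y s" "p1 \<in> hom C s x" "p2 \<in> hom C s y"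
        and e: "comp C p1 i1 = idm C x" "comp C p2 i2 = idm C y"
     "comp C p1 i2 = hzero C y x" "comp C p2 i1 = hzero C x y"
     "hadd C (comp C i1 p1) (comp C i2 p2) = idm C s" using b unfolding biprod_def by auto
      have "biprod C (F x) (F y) (F s) (Fm i1) (Fm i2) (Fm p1) (Fm p2)"
        unfolding biprod_def
      proof (intro conjI)
        show "comp C (Fm p1) (Fm i1) = idm C (F x)" using fc[OF hs(1) hs(3)] e fid o by simp
        show "comp C (Fm p2) (Fm i2) = idm C (F y)" using fc[OF hs(2) hs(4)] e fid o by simp
        show "comp C (Fm p1) (Fm i2) = hzero C (F y) (F x)" using fc[OF hs(2) hs(3)] e Fm_hzero[OF af] o by simp
        show "comp C (Fm p2) (Fm i1) = hzero C (F x) (F y)" using fc[OF hs(1) hs(4)] e Fm_hzero[OF af] o by simp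
        have "Fm (hadd C (comp C i1 p1) (comp C i2 p2)) = hadd C (Fm (comp C i1 p1)) (Fm (comp C i2 p2))"
          using fa comp_hom hs by blast
        then show "hadd C (comp C (Fm i1) (Fm p1)) (comp C (Fm i2) (Fm p2)) = idm C (F s)"
          using fc[OF hs(3) hs(1)] fc[OF hs(4) hs(2)] e fid o by simp
      qed (use o ob fh hs in auto)
      then show ?thesis by blast
    qed
  qed
qed

lemma exD: "x \<in> Ob C \<Longrightarrow> exact_functor C (tens C x) (tensm C (idm C x)) \<and>
                exact_functor C (\<lambda>y. tens C y x) (\<lambda>f. tensm C f (idm C x))"
  using ttri unfolding tensor_triangulated_def by blast
lemma pres_tl: "x \<in> Ob C \<Longrightarrow> pres (tens C x)" using exD exact_pres by blast
lemma pres_tr: "x \<in> Ob C \<Longrightarrow> pres (\<lambda>y. tens C y x)" using exD exact_pres by blast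




lemma shiftm_idm: "x \<in> Ob C \<Longrightarrow> shiftm C (idm C x) = idm C (shift C x)"
  using shift_auto unfolding autoequivalence_def additive_functor_def endofunctor_def by blast

lemma pre_thick: assumes E: "thick C E" and P: "\<And>a. a \<in> A \<Longrightarrow> pres (F a)" and w0: "w0 \<in> Ob C"
  and w0E: "\<And>a. a \<in> A \<Longrightarrow> F a w0 \<in> E"
  shows "thick C {w\<in>Ob C. \<forall>a\<in>A. F a w \<in> E}" (is "thick C ?W")
proof -
  obtain z where z: "zero_obj C z" using ex_zero by blast
  have zo: "z \<in> Ob C" using z zero_ob by blast
  have doms: "dom C (idm C v) = v" "dom C (hzero C v z) = v" "dom C (hzero C z (shift C v)) = z"
    "dom C (hzero C z v) = z" if "v \<in> Ob C" for v
    using hom_D[OF idm_hom[OF that]] hom_D[OF hzero_hom[OF that zo]] hom_D[OF hzero_hom[OF zo shift_ob[OF that]]]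
      hom_D[OF hzero_hom[OF zo that]] by simp_all
  have zW: "z \<in> ?W"
  proof -
    have "F a z \<in> E" if a: "a \<in> A" for a
    proof -
      have "(idm C w0, hzero C w0 z, hzero C z (shift C w0)) \<in> tri C" using tri_zero w0 z by blast
      from pres_tri[OF P[OF a] this] obtain f' g' h' where tt: "(f', g', h') \<in> tri C"
        and d: "dom C f' = F a w0" "dom C g' = F a w0" "dom C h' = F a z" using doms[OF w0] by auto
      show ?thesis using thick_tri[OF E tt] w0E[OF a] unfolding d by blast
    qed
    then show ?thesis using zo by blast
  qed
  show ?thesis
  proof (rule thick_intro)
    show "?W \<subseteq> Ob C" by blast
    show "\<exists>z\<in>?W. zero_obj C z" using zW z by blast
    show "x \<in> Ob C \<Longrightarrow> x \<in> ?W \<longleftrightarrow> shift C x \<in> ?W" for x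
    proof -
      assume x: "x \<in> Ob C"
      have t0: "(idm C x, hzero C x z, hzero C z (shift C x)) \<in> tri C" using tri_zero x z by blast
      have t: "(hzero C x z, hzero C z (shift C x), hneg C (shiftm C (idm C x))) \<in> tri C"
        using tri_rot[OF tri_triangle[OF t0] t0] .
      have H: "F a x \<in> E \<longleftrightarrow> F a (shift C x) \<in> E" if a: "a \<in> A" for a
      proof -
        have dd: "dom C (hneg C (shiftm C (idm C x))) = shift C x"
          using shiftm_idm[OF x] hneg_hom[OF idm_hom[OF shift_ob[OF x]]] hom_D by simp
        from pres_tri[OF P[OF a] t] obtain f' g' h' where tt: "(f', g', h') \<in> tri C"
          and d: "dom C f' = F a x" "dom C g' = F a z" "dom C h' = F a (shift C x)"
          using doms[OF x] dd by auto
        have "F a z \<in> E" using zW a by blast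
        then show ?thesis using thick_tri[OF E tt] unfolding d by blast
      qed
      show ?thesis
      proof
        assume "x \<in> ?W"
        then have "F a (shift C x) \<in> E" if "a \<in> A" for a using H[OF that] that by blast
        then show "shift C x \<in> ?W" using shift_ob[OF x] by blast
      next
        assume "shift C x \<in> ?W"
        then have "F a x \<in> E" if "a \<in> A" for a using H[OF that] that by blast
        then show "x \<in> ?W" using x by blast
      qed
    qed
    show "(dom C f \<in> ?W \<and> dom C g \<in> ?W \<longrightarrow> dom C h \<in> ?W) \<and>
         (dom C g \<in> ?W \<and> dom C h \<in> ?W \<longrightarrow> dom C f \<in> ?W) \<and>
         (dom C h \<in> ?W \<and> dom C f \<in> ?W \<longrightarrow> dom C g \<in> ?W)" if t: "(f, g, h) \<in> tri C" for f g h
    proof -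
      have o: "dom C f \<in> Ob C" "dom C g \<in> Ob C" "dom C h \<in> Ob C" using tri_Ar[OF t] Ar_ob by auto
      have H: "(F a (dom C f) \<in> E \<and> F a (dom C g) \<in> E \<longrightarrow> F a (dom C h) \<in> E) \<and>
         (F a (dom C g) \<in> E \<and> F a (dom C h) \<in> E \<longrightarrow> F a (dom C f) \<in> E) \<and>
         (F a (dom C h) \<in> E \<and> F a (dom C f) \<in> E \<longrightarrow> F a (dom C g) \<in> E)" if a: "a \<in> A" for a
      proof -
        from pres_tri[OF P[OF a] t] obtain f' g' h' where tt: "(f', g', h') \<in> tri C"
          and d: "dom C f' = F a (dom C f)" "dom C g' = F a (dom C g)" "dom C h' = F a (dom C h)" by auto
        show ?thesis using thick_tri[OF E tt] unfolding d .
      qed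
      have H1: "F a (dom C h) \<in> E" if "a \<in> A" "F a (dom C f) \<in> E" "F a (dom C g) \<in> E" for a
        using H[OF that(1)] that(2,3) by (elim conjE) (erule mp, rule conjI)
      have H2: "F a (dom C f) \<in> E" if "a \<in> A" "F a (dom C g) \<in> E" "F a (dom C h) \<in> E" for a
        using H[OF that(1)] that(2,3) by (elim conjE) (erule mp, rule conjI)
      have H3: "F a (dom C g) \<in> E" if "a \<in> A" "F a (dom C h) \<in> E" "F a (dom C f) \<in> E" for a
        using H[OF that(1)] that(2,3) by (elim conjE) (erule mp, rule conjI)
      show ?thesis
      proof (intro conjI impI)
        show "dom C h \<in> ?W" if "dom C f \<in> ?W \<and> dom C g \<in> ?W" using that H1 o(3) by simp
        show "dom C f \<in> ?W" if "dom C g \<in> ?W \<and> dom C h \<in> ?W" using that H2 o(1) by simp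
        show "dom C g \<in> ?W" if "dom C h \<in> ?W \<and> dom C f \<in> ?W" using that H3 o(2) by simp
      qed
    qed
    show "biprod C x y s i1 i2 p1 p2 \<Longrightarrow> s \<in> ?W \<Longrightarrow> x \<in> ?W" for x y s i1 i2 p1 p2
    proof -
      assume b: "biprod C x y s i1 i2 p1 p2" and s: "s \<in> ?W"
      have "F a x \<in> E" if a: "a \<in> A" for a
      proof -
        obtain j1 j2 q1 q2 where "biprod C (F a x) (F a y) (F a s) j1 j2 q1 q2" using pres_bp[OF P[OF a] b] by blast
        moreover have "F a s \<in> E" using s a by blast
        ultimately show ?thesis using thick_summand[OF E] by blast
      qed
      then show ?thesis using biprod_obs[OF b] by blast
    qed
  qed
qed

lemma pre_bpc: assumes "\<And>x y s i1 i2 p1 p2. biprod C x y s i1 i2 p1 p2 \<Longrightarrow> x \<in> E \<Longrightarrow> y \<in> E \<Longrightarrow> s \<in> E"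
  and P: "\<And>a. a \<in> A \<Longrightarrow> pres (F a)"
  and b: "biprod C x y s i1 i2 p1 p2" and "x \<in> {w\<in>Ob C. \<forall>a\<in>A. F a w \<in> E}" "y \<in> {w\<in>Ob C. \<forall>a\<in>A. F a w \<in> E}"
  shows "s \<in> {w\<in>Ob C. \<forall>a\<in>A. F a w \<in> E}"
proof -
  have "F a s \<in> E" if a: "a \<in> A" for a
  proof -
    obtain j1 j2 q1 q2 where bb: "biprod C (F a x) (F a y) (F a s) j1 j2 q1 q2" using pres_bp[OF P[OF a] b] by blast
    have "F a x \<in> E" "F a y \<in> E" using assms(4,5) a by auto
    then show ?thesis using assms(1)[OF bb] by blast
  qed
  then show ?thesis using biprod_obs[OF b] by blast
qed

lemma pre_ttid: assumes G: "thick_tensor_ideal C G" and P: "\<And>a. a \<in> A \<Longrightarrow> pres (F a)" and w0: "w0 \<in> Ob C"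
  and w0E: "\<And>a. a \<in> A \<Longrightarrow> F a w0 \<in> G"
  and cl1: "\<And>w u. w \<in> Ob C \<Longrightarrow> u \<in> Ob C \<Longrightarrow> (\<forall>a\<in>A. F a w \<in> G) \<Longrightarrow> (\<forall>a\<in>A. F a (tens C w u) \<in> G)"
  and cl2: "\<And>w u. w \<in> Ob C \<Longrightarrow> u \<in> Ob C \<Longrightarrow> (\<forall>a\<in>A. F a w \<in> G) \<Longrightarrow> (\<forall>a\<in>A. F a (tens C u w) \<in> G)"
  shows "thick_tensor_ideal C {w\<in>Ob C. \<forall>a\<in>A. F a w \<in> G}"
proof (rule ttid_intro)
  show "thick C {w\<in>Ob C. \<forall>a\<in>A. F a w \<in> G}" by (rule pre_thick[OF ttidD[OF G] P w0 w0E])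
  show "biprod C x y s i1 i2 p1 p2 \<Longrightarrow> x \<in> {w\<in>Ob C. \<forall>a\<in>A. F a w \<in> G} \<Longrightarrow> y \<in> {w\<in>Ob C. \<forall>a\<in>A. F a w \<in> G}
     \<Longrightarrow> s \<in> {w\<in>Ob C. \<forall>a\<in>A. F a w \<in> G}" for x y s i1 i2 p1 p2
    by (rule pre_bpc[OF ttid_bp[OF G] P])
  show "x \<in> {w\<in>Ob C. \<forall>a\<in>A. F a w \<in> G} \<Longrightarrow> y \<in> Ob C \<Longrightarrow> tens C x y \<in> {w\<in>Ob C. \<forall>a\<in>A. F a w \<in> G}" for x y
  proof -
    assume x: "x \<in> {w\<in>Ob C. \<forall>a\<in>A. F a w \<in> G}" and y: "y \<in> Ob C"
    have "\<forall>a\<in>A. F a (tens C x y) \<in> G" using cl1[of x y] x y by blast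
    then show ?thesis using tens_ob[of x y] x y by blast
  qed
  show "x \<in> Ob C \<Longrightarrow> y \<in> {w\<in>Ob C. \<forall>a\<in>A. F a w \<in> G} \<Longrightarrow> tens C x y \<in> {w\<in>Ob C. \<forall>a\<in>A. F a w \<in> G}" for x y
  proof -
    assume x: "x \<in> Ob C" and y: "y \<in> {w\<in>Ob C. \<forall>a\<in>A. F a w \<in> G}"
    have "\<forall>a\<in>A. F a (tens C x y) \<in> G" using cl2[of y x] x y by blast
    then show ?thesis using tens_ob[of x y] x y by blast
  qed
qed




lemma gen_fin: assumes X: "X \<subseteq> Ob C" and x: "x \<in> gen C X"
  shows "\<exists>Y. finite Y \<and> Y \<subseteq> X \<and> x \<in> gen C Y"
proof -
  define U where "U = \<Union>(gen C ` {Y. finite Y \<and> Y \<subseteq> X})"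
  have U_iff: "v \<in> U \<longleftrightarrow> (\<exists>Y. finite Y \<and> Y \<subseteq> X \<and> v \<in> gen C Y)" for v
    unfolding U_def by blast
  have gY: "thick_tensor_ideal C (gen C Y)" if "Y \<subseteq> X" for Y
    using gen_ttid that X by blast
  have two: "\<exists>Y. finite Y \<and> Y \<subseteq> X \<and> v \<in> gen C Y \<and> w \<in> gen C Y" if vw: "v \<in> U" "w \<in> U" for v w
  proof -
    obtain Y1 where "finite Y1" "Y1 \<subseteq> X" "v \<in> gen C Y1" using vw(1) U_iff by blast
    moreover obtain Y2 where "finite Y2" "Y2 \<subseteq> X" "w \<in> gen C Y2" using vw(2) U_iff by blast
    moreover have "gen C Y1 \<subseteq> gen C (Y1 \<union> Y2)" "gen C Y2 \<subseteq> gen C (Y1 \<union> Y2)" using gen_mono by auto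
    ultimately show ?thesis by (intro exI[of _ "Y1 \<union> Y2"]) auto
  qed
  have "thick_tensor_ideal C U"
  proof (rule ttid_intro)
    show "thick C U"
    proof (rule thick_intro)
      show "U \<subseteq> Ob C" unfolding U_def using gen_sub X by blast
      obtain z where "z \<in> gen C {}" "zero_obj C z" using thick_zero[OF ttidD[OF gY[of "{}"]]] by blast
      then show "\<exists>z\<in>U. zero_obj C z" using U_iff by blast
      show "v \<in> U \<longleftrightarrow> shift C v \<in> U" if v: "v \<in> Ob C" for v
      proof
        assume "v \<in> U"
        then obtain Y where Y: "finite Y" "Y \<subseteq> X" "v \<in> gen C Y" using U_iff by blast
        then have "shift C v \<in> gen C Y" using thick_shift[OF ttidD[OF gY[OF Y(2)]] v] by blast
        then show "shift C v \<in> U" using U_iff Y by blast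
      next
        assume "shift C v \<in> U"
        then obtain Y where Y: "finite Y" "Y \<subseteq> X" "shift C v \<in> gen C Y" using U_iff by blast
        then have "v \<in> gen C Y" using thick_shift[OF ttidD[OF gY[OF Y(2)]] v] by blast
        then show "v \<in> U" using U_iff Y by blast
      qed
      show "(dom C f \<in> U \<and> dom C g \<in> U \<longrightarrow> dom C h \<in> U) \<and>
         (dom C g \<in> U \<and> dom C h \<in> U \<longrightarrow> dom C f \<in> U) \<and>
         (dom C h \<in> U \<and> dom C f \<in> U \<longrightarrow> dom C g \<in> U)" if t: "(f, g, h) \<in> tri C" for f g h
      proof (intro conjI impI)
        assume "dom C f \<in> U \<and> dom C g \<in> U"
        then obtain Y where Y: "finite Y" "Y \<subseteq> X" "dom C f \<in> gen C Y" "dom C g \<in> gen C Y" using two by blast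
        have "dom C h \<in> gen C Y" using thick_tri[OF ttidD[OF gY[OF Y(2)]] t] Y(3,4) by blast
        then show "dom C h \<in> U" using U_iff Y by blast
      next
        assume "dom C g \<in> U \<and> dom C h \<in> U"
        then obtain Y where Y: "finite Y" "Y \<subseteq> X" "dom C g \<in> gen C Y" "dom C h \<in> gen C Y" using two by blast
        have "dom C f \<in> gen C Y" using thick_tri[OF ttidD[OF gY[OF Y(2)]] t] Y(3,4) by blast
        then show "dom C f \<in> U" using U_iff Y by blast
      next
        assume "dom C h \<in> U \<and> dom C f \<in> U"
        then obtain Y where Y: "finite Y" "Y \<subseteq> X" "dom C h \<in> gen C Y" "dom C f \<in> gen C Y" using two by blast
        have "dom C g \<in> gen C Y" using thick_tri[OF ttidD[OF gY[OF Y(2)]] t] Y(3,4) by blast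
        then show "dom C g \<in> U" using U_iff Y by blast
      qed
      show "a \<in> U" if b: "biprod C a b s i1 i2 p1 p2" and s: "s \<in> U" for a b s i1 i2 p1 p2
      proof -
        obtain Y where Y: "finite Y" "Y \<subseteq> X" "s \<in> gen C Y" using s U_iff by blast
        then have "a \<in> gen C Y" using thick_summand[OF ttidD[OF gY[OF Y(2)]] b] by blast
        then show "a \<in> U" using U_iff Y by blast
      qed
    qed
    show "biprod C a b s i1 i2 p1 p2 \<Longrightarrow> a \<in> U \<Longrightarrow> b \<in> U \<Longrightarrow> s \<in> U" for a b s i1 i2 p1 p2
    proof -
      assume b: "biprod C a b s i1 i2 p1 p2" and "a \<in> U" "b \<in> U"
      then obtain Y where Y: "finite Y" "Y \<subseteq> X" "a \<in> gen C Y" "b \<in> gen C Y" using two by blast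
      have "s \<in> gen C Y" using ttid_bp[OF gY[OF Y(2)] b Y(3,4)] .
      then show "s \<in> U" using U_iff Y by blast
    qed
    show "tens C a b \<in> U" if a: "a \<in> U" and b: "b \<in> Ob C" for a b
    proof -
      obtain Y where Y: "finite Y" "Y \<subseteq> X" "a \<in> gen C Y" using a U_iff by blast
      then have "tens C a b \<in> gen C Y" using ttid_tl[OF gY[OF Y(2)] _ b] by blast
      then show ?thesis using U_iff Y by blast
    qed
    show "tens C a b \<in> U" if a: "a \<in> Ob C" and b: "b \<in> U" for a b
    proof -
      obtain Y where Y: "finite Y" "Y \<subseteq> X" "b \<in> gen C Y" using b U_iff by blast
      then have "tens C a b \<in> gen C Y" using ttid_tr[OF gY[OF Y(2)] a] by blast
      then show ?thesis using U_iff Y by blast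
    qed
  qed
  moreover have "X \<subseteq> U"
  proof
    fix v assume "v \<in> X" then show "v \<in> U" unfolding U_iff using gen_incl[of "{v}"] by blast
  qed
  ultimately have "gen C X \<subseteq> U" using gen_least by blast
  then show ?thesis using x U_iff by blast
qed



lemma gen_principal: assumes "finite X" "X \<subseteq> Ob C" shows "\<exists>w\<in>Ob C. gen C X = gen C {w}"
  using assms
proof (induction X rule: finite_induct)
  case empty
  obtain z where z: "zero_obj C z" using ex_zero by blast
  have "z \<in> gen C {}" using zero_in_thick[OF ttidD[OF gen_ttid] z] by blast
  then have "gen C {z} \<subseteq> gen C {}" using gen_least[OF gen_ttid] by blast
  moreover have "gen C {} \<subseteq> gen C {z}" using gen_mono by blast
  ultimately show ?case using zero_ob[OF z] by blast
next
  case (insert x X)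
  then obtain w where w: "w \<in> Ob C" "gen C X = gen C {w}" by blast
  have x: "x \<in> Ob C" using insert by blast
  obtain s i1 i2 p1 p2 where b: "biprod C w x s i1 i2 p1 p2" using ex_biprod[OF w(1) x] by blast
  have so: "s \<in> Ob C" using biprod_obs[OF b] by blast
  have gs: "thick_tensor_ideal C (gen C {s})" using gen_ttid so by blast
  have gi: "thick_tensor_ideal C (gen C (insert x X))" using gen_ttid insert by blast
  have s_in: "s \<in> gen C {s}" using gen_incl by blast
  have "w \<in> gen C {s}" using thick_summand[OF ttidD[OF gs] b s_in] .
  then have "gen C {w} \<subseteq> gen C {s}" using gen_least[OF gs] by blast
  then have X1: "X \<subseteq> gen C {s}" using w(2) gen_incl[of X] by blast
  have "x \<in> gen C {s}" using thick_summand[OF ttidD[OF gs] biprod_swap[OF b] s_in] .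
  with X1 have "gen C (insert x X) \<subseteq> gen C {s}" using gen_least[OF gs] by blast
  moreover have "s \<in> gen C (insert x X)"
  proof -
    have "w \<in> gen C X" using w(2) gen_incl[of "{w}"] by blast
    also have "gen C X \<subseteq> gen C (insert x X)" using gen_mono by blast
    finally have "w \<in> gen C (insert x X)" .
    moreover have "x \<in> gen C (insert x X)" using gen_incl by blast
    ultimately show ?thesis using ttid_bp[OF gi b] by blast
  qed
  then have "gen C {s} \<subseteq> gen C (insert x X)" using gen_least[OF gi] by blast
  ultimately show ?case using so by blast
qed



abbreviation "LL \<equiv> {D. thick_tensor_ideal C D}"

lemma is_sup_gen: assumes "A \<subseteq> LL" shows "is_sup LL (\<subseteq>) A (gen C (\<Union>A))"
proof -
  have "\<Union>A \<subseteq> Ob C" using assms ttid_sub by blast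
  then have "thick_tensor_ideal C (gen C (\<Union>A))" using gen_ttid by blast
  then show ?thesis unfolding is_sup_def
  proof (intro conjI ballI impI)
    show "a \<subseteq> gen C (\<Union>A)" if "a \<in> A" for a using that gen_incl[of "\<Union>A"] by blast
    show "gen C (\<Union>A) \<subseteq> u" if "u \<in> LL" "\<forall>a\<in>A. a \<subseteq> u" for u
    proof -
      have "\<Union>A \<subseteq> u" using that(2) by blast
      then show ?thesis using gen_least that(1) by blast
    qed
  qed simp
qed

lemma is_sup_eq: assumes "A \<subseteq> LL" "is_sup LL (\<subseteq>) A s" shows "s = gen C (\<Union>A)"
proof -
  have 1: "is_sup LL (\<subseteq>) A (gen C (\<Union>A))" using is_sup_gen assms by blast
  have a: "s \<in> LL" "\<forall>a\<in>A. a \<subseteq> s" "\<forall>u\<in>LL. (\<forall>a\<in>A. a \<subseteq> u) \<longrightarrow> s \<subseteq> u"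
    using assms(2) unfolding is_sup_def by auto
  have b: "gen C (\<Union>A) \<in> LL" "\<forall>a\<in>A. a \<subseteq> gen C (\<Union>A)" "\<forall>u\<in>LL. (\<forall>a\<in>A. a \<subseteq> u) \<longrightarrow> gen C (\<Union>A) \<subseteq> u"
    using 1 unfolding is_sup_def by auto
  have "s \<subseteq> gen C (\<Union>A)" using a(3) b(1,2) by blast
  moreover have "gen C (\<Union>A) \<subseteq> s" using b(3) a(1,2) by blast
  ultimately show ?thesis by blast
qed



lemma principal_compact: assumes x: "x \<in> Ob C" shows "compact_el LL (\<subseteq>) (gen C {x})"
  unfolding compact_el_def
proof (intro conjI allI impI)
  show "gen C {x} \<in> LL" using gen_ttid x by blast
  fix A s assume A: "A \<subseteq> LL" and s: "is_sup LL (\<subseteq>) A s" and xs: "gen C {x} \<subseteq> s"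
  have seq: "s = gen C (\<Union>A)" using is_sup_eq[OF A s] .
  have UO: "\<Union>A \<subseteq> Ob C"
  proof
    fix v assume "v \<in> \<Union>A" then obtain a where "a \<in> A" "v \<in> a" by blast
    then show "v \<in> Ob C" using ttid_sub A by blast
  qed
  have "x \<in> gen C (\<Union>A)" using xs gen_incl[of "{x}"] unfolding seq by blast
  then obtain Y where Y: "finite Y" "Y \<subseteq> \<Union>A" "x \<in> gen C Y" using gen_fin[OF UO] by blast
  obtain A' where A': "finite A'" "A' \<subseteq> A" "Y \<subseteq> \<Union>A'" using finite_subset_Union[OF Y(1,2)] by blast
  have A'L: "A' \<subseteq> LL" using A' A by blast
  have "x \<in> gen C (\<Union>A')" using Y(3) gen_mono[OF A'(3)] by blast
  moreover have "\<Union>A' \<subseteq> Ob C" using UO A'(2) by blast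
  then have "thick_tensor_ideal C (gen C (\<Union>A'))" by (rule gen_ttid)
  ultimately have "gen C {x} \<subseteq> gen C (\<Union>A')" using gen_least[of "gen C (\<Union>A')" "{x}"] by blast
  then show "\<exists>A' s'. A' \<subseteq> A \<and> finite A' \<and> is_sup LL (\<subseteq>) A' s' \<and> gen C {x} \<subseteq> s'"
    using A'(1,2) is_sup_gen[OF A'L] by (intro exI[of _ A'] exI[of _ "gen C (\<Union>A')"]) simp
qed

lemma compact_principal: assumes c: "compact_el LL (\<subseteq>) D" shows "\<exists>x\<in>Ob C. D = gen C {x}"
proof -
  have D: "thick_tensor_ideal C D" using c unfolding compact_el_def by blast
  have DO: "D \<subseteq> Ob C" using ttid_sub[OF D] .
  define A where "A = (\<lambda>x. gen C {x}) ` D"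
  have AL: "A \<subseteq> LL"
  proof
    fix a assume "a \<in> A" then obtain x where "x \<in> D" "a = gen C {x}" unfolding A_def by blast
    then show "a \<in> LL" using gen_ttid[of "{x}"] DO by blast
  qed
  have gD: "gen C {x} \<subseteq> D" if "x \<in> D" for x using gen_least[OF D, of "{x}"] that by blast
  have supD: "is_sup LL (\<subseteq>) A D" unfolding is_sup_def
  proof (intro conjI ballI impI)
    show "D \<in> LL" using D by blast
    show "a \<subseteq> D" if "a \<in> A" for a using that gD unfolding A_def by blast
    show "D \<subseteq> u" if "u \<in> LL" "\<forall>a\<in>A. a \<subseteq> u" for u
    proof
      fix x assume "x \<in> D"
      then have "gen C {x} \<subseteq> u" using that(2) unfolding A_def by blast
      then show "x \<in> u" using gen_incl[of "{x}"] by blast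
    qed
  qed
  have cc: "\<forall>A s. A \<subseteq> LL \<longrightarrow> is_sup LL (\<subseteq>) A s \<longrightarrow> D \<subseteq> s \<longrightarrow>
        (\<exists>A' s'. A' \<subseteq> A \<and> finite A' \<and> is_sup LL (\<subseteq>) A' s' \<and> D \<subseteq> s')"
    using c unfolding compact_el_def by (elim conjE)
  obtain A' s' where A': "A' \<subseteq> A" "finite A'" "is_sup LL (\<subseteq>) A' s'" "D \<subseteq> s'"
    using cc[rule_format, OF AL supD subset_refl] by blast
  have "A' \<subseteq> (\<lambda>x. gen C {x}) ` D" using A'(1) unfolding A_def .
  from finite_subset_image[OF A'(2) this]
  obtain X where X: "X \<subseteq> D" "finite X" "A' = (\<lambda>x. gen C {x}) ` X" by (elim exE conjE) simp
  have A'L: "A' \<subseteq> LL" using A'(1) AL by blast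
  have s': "s' = gen C (\<Union>A')" using is_sup_eq[OF A'L A'(3)] .
  have "\<Union>A' \<subseteq> D"
  proof
    fix v assume "v \<in> \<Union>A'"
    then obtain x where "x \<in> X" "v \<in> gen C {x}" using X(3) by blast
    then show "v \<in> D" using gD X(1) by blast
  qed
  then have "s' \<subseteq> D" unfolding s' by (rule gen_least[OF D])
  then have Ds: "D = s'" using A'(4) by blast
  have XO: "X \<subseteq> Ob C" using X(1) DO by blast
  have gX: "thick_tensor_ideal C (gen C X)" using gen_ttid[OF XO] .
  have "X \<subseteq> \<Union>A'"
  proof
    fix x assume "x \<in> X"
    then have "gen C {x} \<in> A'" "x \<in> gen C {x}" using X(3) gen_incl[of "{x}"] by auto
    then show "x \<in> \<Union>A'" by blast
  qed
  then have "gen C X \<subseteq> s'" unfolding s' by (rule gen_mono)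
  moreover have "\<Union>A' \<subseteq> gen C X"
  proof
    fix v assume "v \<in> \<Union>A'"
    then obtain x where x: "x \<in> X" "v \<in> gen C {x}" using X(3) by blast
    have "gen C {x} \<subseteq> gen C X" using gen_mono x(1) by blast
    then show "v \<in> gen C X" using x(2) by blast
  qed
  then have "s' \<subseteq> gen C X" unfolding s' by (rule gen_least[OF gX])
  ultimately have "D = gen C X" using Ds by blast
  then show ?thesis using gen_principal[OF X(2) XO] by blast
qed




definition TT where "TT a b = {tens C x y | x y. x \<in> a \<and> y \<in> b}"

lemma TT_ob: "a \<subseteq> Ob C \<Longrightarrow> b \<subseteq> Ob C \<Longrightarrow> TT a b \<subseteq> Ob C"
  unfolding TT_def using tens_ob by blast
lemma TT_I: "x \<in> a \<Longrightarrow> y \<in> b \<Longrightarrow> tens C x y \<in> TT a b"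
  unfolding TT_def by blast
lemma TT_mono: "a \<subseteq> a' \<Longrightarrow> b \<subseteq> b' \<Longrightarrow> TT a b \<subseteq> TT a' b'"
  unfolding TT_def by blast
lemma TT_sub: assumes "\<And>x y. x \<in> a \<Longrightarrow> y \<in> b \<Longrightarrow> tens C x y \<in> G" shows "TT a b \<subseteq> G"
  unfolding TT_def using assms by blast

lemma fc_sub: assumes S: "S \<subseteq> Ob C" shows "fin_coprods C S \<subseteq> gen C S"
proof
  fix v assume "v \<in> fin_coprods C S"
  then show "v \<in> gen C S"
  proof (induction rule: fin_coprods.induct)
    case (empty z)
    then show ?case using zero_in_thick[OF ttidD[OF gen_ttid[OF S]]] by blast
  next
    case (step a b s i1 i2 p1 p2)
    have "b \<in> gen C S" using step(2) gen_incl by blast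
    then show ?case using ttid_bp[OF gen_ttid[OF S] step(3) step(4)] by blast
  qed
qed

lemma gen_fc: assumes S: "S \<subseteq> Ob C" shows "gen C (fin_coprods C S) = gen C S"
proof
  show "gen C (fin_coprods C S) \<subseteq> gen C S" using gen_least[OF gen_ttid[OF S] fc_sub[OF S]] .
  have FO: "fin_coprods C S \<subseteq> Ob C" using fc_sub[OF S] gen_sub[OF S] by blast
  have g: "thick_tensor_ideal C (gen C (fin_coprods C S))" using gen_ttid[OF FO] .
  have "S \<subseteq> gen C (fin_coprods C S)"
  proof
    fix b assume b: "b \<in> S"
    obtain z where z: "zero_obj C z" using ex_zero by blast
    have zf: "z \<in> fin_coprods C S" using fin_coprods.empty[OF z] .
    obtain s i1 i2 p1 p2 where bp: "biprod C z b s i1 i2 p1 p2" using ex_biprod[OF zero_ob[OF z]] b S by blast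
    have "s \<in> fin_coprods C S" using fin_coprods.step[OF zf b bp] .
    then have "s \<in> gen C (fin_coprods C S)" using gen_incl by blast
    then show "b \<in> gen C (fin_coprods C S)" using thick_summand[OF ttidD[OF g] biprod_swap[OF bp]] by blast
  qed
  then show "gen C S \<subseteq> gen C (fin_coprods C S)" using gen_least[OF g] by blast
qed

lemma mul_eq: assumes "a \<subseteq> Ob C" "b \<subseteq> Ob C" shows "gen C (prod_cls C a b) = gen C (TT a b)"
proof -
  have "prod_cls C a b = fin_coprods C (TT a b)" unfolding prod_cls_def TT_def by simp
  then show ?thesis using gen_fc[OF TT_ob[OF assms]] by simp
qed

lemma Wl: assumes G: "thick_tensor_ideal C G" and A: "A \<subseteq> Ob C" and w0: "w0 \<in> Ob C"
  and w0G: "\<And>a. a \<in> A \<Longrightarrow> tens C a w0 \<in> G"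
  and cl1: "\<And>w u a. w \<in> Ob C \<Longrightarrow> u \<in> Ob C \<Longrightarrow> (\<forall>a\<in>A. tens C a w \<in> G) \<Longrightarrow> a \<in> A \<Longrightarrow> tens C a (tens C w u) \<in> G"
  and cl2: "\<And>w u a. w \<in> Ob C \<Longrightarrow> u \<in> Ob C \<Longrightarrow> (\<forall>a\<in>A. tens C a w \<in> G) \<Longrightarrow> a \<in> A \<Longrightarrow> tens C a (tens C u w) \<in> G"
  shows "thick_tensor_ideal C {w\<in>Ob C. \<forall>a\<in>A. tens C a w \<in> G}"
proof -
  have P: "pres (tens C a)" if "a \<in> A" for a using pres_tl that A by blast
  show ?thesis
    by (rule pre_ttid[of G A "tens C", OF G P w0 w0G]) (use cl1 cl2 in blast)+
qed

lemma Wr: assumes G: "thick_tensor_ideal C G" and A: "A \<subseteq> Ob C" and w0: "w0 \<in> Ob C"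
  and w0G: "\<And>a. a \<in> A \<Longrightarrow> tens C w0 a \<in> G"
  and cl1: "\<And>w u a. w \<in> Ob C \<Longrightarrow> u \<in> Ob C \<Longrightarrow> (\<forall>a\<in>A. tens C w a \<in> G) \<Longrightarrow> a \<in> A \<Longrightarrow> tens C (tens C w u) a \<in> G"
  and cl2: "\<And>w u a. w \<in> Ob C \<Longrightarrow> u \<in> Ob C \<Longrightarrow> (\<forall>a\<in>A. tens C w a \<in> G) \<Longrightarrow> a \<in> A \<Longrightarrow> tens C (tens C u w) a \<in> G"
  shows "thick_tensor_ideal C {w\<in>Ob C. \<forall>a\<in>A. tens C w a \<in> G}"
proof -
  have P: "pres (\<lambda>w. tens C w a)" if "a \<in> A" for a using pres_tr that A by blast
  show ?thesis
    by (rule pre_ttid[of G A "\<lambda>a w. tens C w a", simplified, OF G P w0 w0G]) (use cl1 cl2 in blast)+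
qed




lemma ttid_ne: "thick_tensor_ideal C D \<Longrightarrow> \<exists>z. z \<in> D"
  using thick_zero[OF ttidD] by blast
lemma ttid_ob: "thick_tensor_ideal C D \<Longrightarrow> x \<in> D \<Longrightarrow> x \<in> Ob C"
  using ttid_sub by blast
lemma gen_ob: "X \<subseteq> Ob C \<Longrightarrow> x \<in> gen C X \<Longrightarrow> x \<in> Ob C"
  using gen_sub by blast
lemma gen_isob: "X \<subseteq> Ob C \<Longrightarrow> x \<in> gen C X \<Longrightarrow> isob x y \<Longrightarrow> y \<in> gen C X"
  using isob_closed[OF ttidD[OF gen_ttid]] by blast

lemma unit_left: assumes a: "thick_tensor_ideal C a" shows "gen C (TT (Ob C) a) = a"
proof
  show "gen C (TT (Ob C) a) \<subseteq> a"
    by (rule gen_least[OF a]) (rule TT_sub, rule ttid_tr[OF a])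
  have TO: "TT (Ob C) a \<subseteq> Ob C" using TT_ob ttid_sub[OF a] by blast
  show "a \<subseteq> gen C (TT (Ob C) a)"
  proof
    fix y assume y: "y \<in> a"
    have yo: "y \<in> Ob C" using ttid_ob[OF a y] .
    have "tens C (unit C) y \<in> gen C (TT (Ob C) a)" using TT_I[OF unit_ob y] gen_incl by blast
    then show "y \<in> gen C (TT (Ob C) a)" using gen_isob[OF TO _ isob_lunit[OF yo]] by blast
  qed
qed

lemma unit_right: assumes a: "thick_tensor_ideal C a" shows "gen C (TT a (Ob C)) = a"
proof
  show "gen C (TT a (Ob C)) \<subseteq> a"
    by (rule gen_least[OF a]) (rule TT_sub, rule ttid_tl[OF a])
  have TO: "TT a (Ob C) \<subseteq> Ob C" using TT_ob ttid_sub[OF a] by blast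
  show "a \<subseteq> gen C (TT a (Ob C))"
  proof
    fix y assume y: "y \<in> a"
    have yo: "y \<in> Ob C" using ttid_ob[OF a y] .
    have "tens C y (unit C) \<in> gen C (TT a (Ob C))" using TT_I[OF y unit_ob] gen_incl by blast
    then show "y \<in> gen C (TT a (Ob C))" using gen_isob[OF TO _ isob_runit[OF yo]] by blast
  qed
qed

lemma gen_unit: "gen C {unit C} = Ob C"
proof
  show "gen C {unit C} \<subseteq> Ob C" using gen_sub unit_ob by blast
  have g: "thick_tensor_ideal C (gen C {unit C})" using gen_ttid unit_ob by blast
  show "Ob C \<subseteq> gen C {unit C}"
  proof
    fix x assume x: "x \<in> Ob C"
    have "tens C x (unit C) \<in> gen C {unit C}" using ttid_tr[OF g x] gen_incl by blast
    then show "x \<in> gen C {unit C}" using isob_closed[OF ttidD[OF g] _ isob_runit[OF x]] by blast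
  qed
qed

lemma assoc_mul: assumes a: "thick_tensor_ideal C a" and b: "thick_tensor_ideal C b" and c: "thick_tensor_ideal C c"
  shows "gen C (TT (gen C (TT a b)) c) = gen C (TT a (gen C (TT b c)))"
proof -
  have aO: "a \<subseteq> Ob C" and bO: "b \<subseteq> Ob C" and cO: "c \<subseteq> Ob C" using ttid_sub a b c by auto
  define T3 where "T3 = {tens C (tens C x y) z | x y z. x \<in> a \<and> y \<in> b \<and> z \<in> c}"
  have T3O: "T3 \<subseteq> Ob C" unfolding T3_def using tens_ob aO bO cO by blast
  define G where "G = gen C T3"
  have G: "thick_tensor_ideal C G" unfolding G_def using gen_ttid[OF T3O] .
  have T3G: "tens C (tens C x y) z \<in> G" if "x \<in> a" "y \<in> b" "z \<in> c" for x y z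
    unfolding G_def using gen_incl[of T3] that unfolding T3_def by blast
  have abO: "TT a b \<subseteq> Ob C" using TT_ob[OF aO bO] .
  have bcO: "TT b c \<subseteq> Ob C" using TT_ob[OF bO cO] .
  obtain x0 where x0: "x0 \<in> a" using ttid_ne[OF a] by blast
  obtain y0 where y0: "y0 \<in> b" using ttid_ne[OF b] by blast
  obtain z0 where z0: "z0 \<in> c" using ttid_ne[OF c] by blast
  have "gen C (TT (gen C (TT a b)) c) = G"
  proof
    define W where "W = {w\<in>Ob C. \<forall>z\<in>c. tens C w z \<in> G}"
    have W: "thick_tensor_ideal C W" unfolding W_def
    proof (rule Wr[OF G cO])
      show "tens C x0 y0 \<in> Ob C" using tens_ob x0 y0 aO bO by blast
      show "tens C (tens C x0 y0) z \<in> G" if "z \<in> c" for z using T3G x0 y0 that by blast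
      show "tens C (tens C w u) z \<in> G" if "w \<in> Ob C" "u \<in> Ob C" "\<forall>a\<in>c. tens C w a \<in> G" "z \<in> c" for w u z
      proof -
        have "tens C u z \<in> c" using ttid_tr[OF c that(2,4)] .
        then have "tens C w (tens C u z) \<in> G" using that(3) by blast
        then show ?thesis using isob_closed[OF ttidD[OF G] _ isob_assoc'[OF that(1,2) ttid_ob[OF c that(4)]]] by blast
      qed
      show "tens C (tens C u w) z \<in> G" if "w \<in> Ob C" "u \<in> Ob C" "\<forall>a\<in>c. tens C w a \<in> G" "z \<in> c" for w u z
      proof -
        have "tens C w z \<in> G" using that(3,4) by blast
        then have "tens C u (tens C w z) \<in> G" using ttid_tr[OF G that(2)] by blast
        then show ?thesis using isob_closed[OF ttidD[OF G] _ isob_assoc'[OF that(2,1) ttid_ob[OF c that(4)]]] by blast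
      qed
    qed
    have "TT a b \<subseteq> W"
    proof (rule TT_sub)
      fix x y assume "x \<in> a" "y \<in> b"
      then show "tens C x y \<in> W" unfolding W_def using T3G tens_ob aO bO by blast
    qed
    then have gW: "gen C (TT a b) \<subseteq> W" using gen_least[OF W] by blast
    have "TT (gen C (TT a b)) c \<subseteq> G"
    proof (rule TT_sub)
      fix w z assume "w \<in> gen C (TT a b)" "z \<in> c"
      then show "tens C w z \<in> G" using gW unfolding W_def by blast
    qed
    then show "gen C (TT (gen C (TT a b)) c) \<subseteq> G" using gen_least[OF G] by blast
    have "T3 \<subseteq> TT (gen C (TT a b)) c" unfolding T3_def
    proof
      fix v assume "v \<in> {tens C (tens C x y) z | x y z. x \<in> a \<and> y \<in> b \<and> z \<in> c}"
      then obtain x y z where "v = tens C (tens C x y) z" "x \<in> a" "y \<in> b" "z \<in> c" by blast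
      then show "v \<in> TT (gen C (TT a b)) c" using TT_I[of "tens C x y" "gen C (TT a b)" z c] TT_I[of x a y b] gen_incl by blast
    qed
    then have "T3 \<subseteq> gen C (TT (gen C (TT a b)) c)" using gen_incl by blast
    moreover have "thick_tensor_ideal C (gen C (TT (gen C (TT a b)) c))"
      using gen_ttid TT_ob gen_sub[OF abO] cO by blast
    ultimately show "G \<subseteq> gen C (TT (gen C (TT a b)) c)" unfolding G_def using gen_least by blast
  qed
  moreover have "gen C (TT a (gen C (TT b c))) = G"
  proof
    define W where "W = {w\<in>Ob C. \<forall>x\<in>a. tens C x w \<in> G}"
    have W: "thick_tensor_ideal C W" unfolding W_def
    proof (rule Wl[OF G aO])
      show "tens C y0 z0 \<in> Ob C" using tens_ob y0 z0 bO cO by blast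
      show "tens C x (tens C y0 z0) \<in> G" if "x \<in> a" for x
        using isob_closed[OF ttidD[OF G] T3G[OF that y0 z0] isob_assoc] that y0 z0 aO bO cO by blast
      show "tens C x (tens C w u) \<in> G" if "w \<in> Ob C" "u \<in> Ob C" "\<forall>a\<in>a. tens C a w \<in> G" "x \<in> a" for w u x
      proof -
        have "tens C x w \<in> G" using that(3,4) by blast
        then have "tens C (tens C x w) u \<in> G" using ttid_tl[OF G _ that(2)] by blast
        then show ?thesis using isob_closed[OF ttidD[OF G] _ isob_assoc[OF ttid_ob[OF a that(4)] that(1,2)]] by blast
      qed
      show "tens C x (tens C u w) \<in> G" if "w \<in> Ob C" "u \<in> Ob C" "\<forall>a\<in>a. tens C a w \<in> G" "x \<in> a" for w u x
      proof -
        have "tens C x u \<in> a" using ttid_tl[OF a that(4,2)] .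
        then have "tens C (tens C x u) w \<in> G" using that(3) by blast
        then show ?thesis using isob_closed[OF ttidD[OF G] _ isob_assoc[OF ttid_ob[OF a that(4)] that(2,1)]] by blast
      qed
    qed
    have "TT b c \<subseteq> W"
    proof (rule TT_sub)
      fix y z assume yz: "y \<in> b" "z \<in> c"
      have "tens C x (tens C y z) \<in> G" if "x \<in> a" for x
        using isob_closed[OF ttidD[OF G] T3G[OF that yz] isob_assoc] that yz aO bO cO by blast
      then show "tens C y z \<in> W" unfolding W_def using tens_ob yz bO cO by blast
    qed
    then have gW: "gen C (TT b c) \<subseteq> W" using gen_least[OF W] by blast
    have "TT a (gen C (TT b c)) \<subseteq> G"
    proof (rule TT_sub)
      fix x w assume "x \<in> a" "w \<in> gen C (TT b c)"
      then show "tens C x w \<in> G" using gW unfolding W_def by blast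
    qed
    then show "gen C (TT a (gen C (TT b c))) \<subseteq> G" using gen_least[OF G] by blast
    have g2: "thick_tensor_ideal C (gen C (TT a (gen C (TT b c))))"
      using gen_ttid TT_ob gen_sub[OF bcO] aO by blast
    have "T3 \<subseteq> gen C (TT a (gen C (TT b c)))" unfolding T3_def
    proof
      fix v assume "v \<in> {tens C (tens C x y) z | x y z. x \<in> a \<and> y \<in> b \<and> z \<in> c}"
      then obtain x y z where v: "v = tens C (tens C x y) z" and xyz: "x \<in> a" "y \<in> b" "z \<in> c" by blast
      have "tens C x (tens C y z) \<in> TT a (gen C (TT b c))" using TT_I[of x a "tens C y z"] TT_I[of y b z c] gen_incl xyz by blast
      then have "tens C x (tens C y z) \<in> gen C (TT a (gen C (TT b c)))" using gen_incl by blast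
      then show "v \<in> gen C (TT a (gen C (TT b c)))"
        using isob_closed[OF ttidD[OF g2] _ isob_assoc'] xyz aO bO cO unfolding v by blast
    qed
    then show "G \<subseteq> gen C (TT a (gen C (TT b c)))" unfolding G_def using gen_least[OF g2] by blast
  qed
  ultimately show ?thesis by simp
qed




lemma distrib_l: assumes a: "thick_tensor_ideal C a" and b: "thick_tensor_ideal C b" and c: "thick_tensor_ideal C c"
  shows "gen C (TT a (gen C (b \<union> c))) = gen C (gen C (TT a b) \<union> gen C (TT a c))"
proof -
  have aO: "a \<subseteq> Ob C" and bO: "b \<subseteq> Ob C" and cO: "c \<subseteq> Ob C" using ttid_sub a b c by auto
  have bcO: "b \<union> c \<subseteq> Ob C" using bO cO by blast
  have abO: "TT a b \<subseteq> Ob C" "TT a c \<subseteq> Ob C" using TT_ob aO bO cO by auto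
  have UO: "gen C (TT a b) \<union> gen C (TT a c) \<subseteq> Ob C" using gen_sub abO by blast
  define H where "H = gen C (gen C (TT a b) \<union> gen C (TT a c))"
  have H: "thick_tensor_ideal C H" unfolding H_def using gen_ttid[OF UO] .
  have bH: "tens C x y \<in> H" if "x \<in> a" "y \<in> b \<union> c" for x y
  proof -
    have "tens C x y \<in> TT a b \<union> TT a c" using TT_I that by blast
    then have "tens C x y \<in> gen C (TT a b) \<union> gen C (TT a c)" using gen_incl by blast
    then show ?thesis unfolding H_def using gen_incl by blast
  qed
  obtain y0 where y0: "y0 \<in> b" using ttid_ne[OF b] by blast
  have gO: "gen C (b \<union> c) \<subseteq> Ob C" using gen_sub[OF bcO] .
  have g1: "thick_tensor_ideal C (gen C (TT a (gen C (b \<union> c))))"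
    using gen_ttid TT_ob[OF aO gO] by blast
  have "gen C (TT a (gen C (b \<union> c))) = H"
  proof
    define W where "W = {w\<in>Ob C. \<forall>x\<in>a. tens C x w \<in> H}"
    have W: "thick_tensor_ideal C W" unfolding W_def
    proof (rule Wl[OF H aO])
      show "y0 \<in> Ob C" using y0 bO by blast
      show "tens C x y0 \<in> H" if "x \<in> a" for x using bH that y0 by blast
      show "tens C x (tens C w u) \<in> H" if "w \<in> Ob C" "u \<in> Ob C" "\<forall>a\<in>a. tens C a w \<in> H" "x \<in> a" for w u x
      proof -
        have "tens C x w \<in> H" using that(3,4) by blast
        then have "tens C (tens C x w) u \<in> H" using ttid_tl[OF H _ that(2)] by blast
        then show ?thesis using isob_closed[OF ttidD[OF H] _ isob_assoc[OF ttid_ob[OF a that(4)] that(1,2)]] by blast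
      qed
      show "tens C x (tens C u w) \<in> H" if "w \<in> Ob C" "u \<in> Ob C" "\<forall>a\<in>a. tens C a w \<in> H" "x \<in> a" for w u x
      proof -
        have "tens C x u \<in> a" using ttid_tl[OF a that(4,2)] .
        then have "tens C (tens C x u) w \<in> H" using that(3) by blast
        then show ?thesis using isob_closed[OF ttidD[OF H] _ isob_assoc[OF ttid_ob[OF a that(4)] that(2,1)]] by blast
      qed
    qed
    have "b \<union> c \<subseteq> W"
    proof
      fix y assume y: "y \<in> b \<union> c"
      have "\<forall>x\<in>a. tens C x y \<in> H" using bH y by blast
      then show "y \<in> W" unfolding W_def using y bcO by blast
    qed
    then have gW: "gen C (b \<union> c) \<subseteq> W" using gen_least[OF W] by blast
    have "TT a (gen C (b \<union> c)) \<subseteq> H"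
    proof (rule TT_sub)
      fix x w assume "x \<in> a" "w \<in> gen C (b \<union> c)"
      then show "tens C x w \<in> H" using gW unfolding W_def by blast
    qed
    then show "gen C (TT a (gen C (b \<union> c))) \<subseteq> H" by (rule gen_least[OF H])
    have bg: "b \<subseteq> gen C (b \<union> c)" "c \<subseteq> gen C (b \<union> c)" using gen_incl[of "b \<union> c"] by auto
    have "gen C (TT a b) \<subseteq> gen C (TT a (gen C (b \<union> c)))" "gen C (TT a c) \<subseteq> gen C (TT a (gen C (b \<union> c)))"
      using gen_mono[OF TT_mono[OF subset_refl bg(1)]] gen_mono[OF TT_mono[OF subset_refl bg(2)]] by auto
    then have "gen C (TT a b) \<union> gen C (TT a c) \<subseteq> gen C (TT a (gen C (b \<union> c)))" by blast
    then show "H \<subseteq> gen C (TT a (gen C (b \<union> c)))" unfolding H_def by (rule gen_least[OF g1])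
  qed
  then show ?thesis unfolding H_def .
qed

lemma distrib_r: assumes a: "thick_tensor_ideal C a" and b: "thick_tensor_ideal C b" and c: "thick_tensor_ideal C c"
  shows "gen C (TT (gen C (b \<union> c)) a) = gen C (gen C (TT b a) \<union> gen C (TT c a))"
proof -
  have aO: "a \<subseteq> Ob C" and bO: "b \<subseteq> Ob C" and cO: "c \<subseteq> Ob C" using ttid_sub a b c by auto
  have bcO: "b \<union> c \<subseteq> Ob C" using bO cO by blast
  have abO: "TT b a \<subseteq> Ob C" "TT c a \<subseteq> Ob C" using TT_ob aO bO cO by auto
  have UO: "gen C (TT b a) \<union> gen C (TT c a) \<subseteq> Ob C" using gen_sub abO by blast
  define H where "H = gen C (gen C (TT b a) \<union> gen C (TT c a))"
  have H: "thick_tensor_ideal C H" unfolding H_def using gen_ttid[OF UO] .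
  have bH: "tens C y x \<in> H" if "x \<in> a" "y \<in> b \<union> c" for x y
  proof -
    have "tens C y x \<in> TT b a \<union> TT c a" using TT_I that by blast
    then have "tens C y x \<in> gen C (TT b a) \<union> gen C (TT c a)" using gen_incl by blast
    then show ?thesis unfolding H_def using gen_incl by blast
  qed
  obtain y0 where y0: "y0 \<in> b" using ttid_ne[OF b] by blast
  have gO: "gen C (b \<union> c) \<subseteq> Ob C" using gen_sub[OF bcO] .
  have g1: "thick_tensor_ideal C (gen C (TT (gen C (b \<union> c)) a))"
    using gen_ttid TT_ob[OF gO aO] by blast
  have "gen C (TT (gen C (b \<union> c)) a) = H"
  proof
    define W where "W = {w\<in>Ob C. \<forall>x\<in>a. tens C w x \<in> H}"
    have W: "thick_tensor_ideal C W" unfolding W_def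
    proof (rule Wr[OF H aO])
      show "y0 \<in> Ob C" using y0 bO by blast
      show "tens C y0 x \<in> H" if "x \<in> a" for x using bH that y0 by blast
      show "tens C (tens C w u) x \<in> H" if "w \<in> Ob C" "u \<in> Ob C" "\<forall>a\<in>a. tens C w a \<in> H" "x \<in> a" for w u x
      proof -
        have "tens C u x \<in> a" using ttid_tr[OF a that(2,4)] .
        then have "tens C w (tens C u x) \<in> H" using that(3) by blast
        then show ?thesis using isob_closed[OF ttidD[OF H] _ isob_assoc'[OF that(1,2) ttid_ob[OF a that(4)]]] by blast
      qed
      show "tens C (tens C u w) x \<in> H" if "w \<in> Ob C" "u \<in> Ob C" "\<forall>a\<in>a. tens C w a \<in> H" "x \<in> a" for w u x
      proof -
        have "tens C w x \<in> H" using that(3,4) by blast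
        then have "tens C u (tens C w x) \<in> H" using ttid_tr[OF H that(2)] by blast
        then show ?thesis using isob_closed[OF ttidD[OF H] _ isob_assoc'[OF that(2,1) ttid_ob[OF a that(4)]]] by blast
      qed
    qed
    have "b \<union> c \<subseteq> W"
    proof
      fix y assume y: "y \<in> b \<union> c"
      have "\<forall>x\<in>a. tens C y x \<in> H" using bH y by blast
      then show "y \<in> W" unfolding W_def using y bcO by blast
    qed
    then have gW: "gen C (b \<union> c) \<subseteq> W" using gen_least[OF W] by blast
    have "TT (gen C (b \<union> c)) a \<subseteq> H"
    proof (rule TT_sub)
      fix w x assume "w \<in> gen C (b \<union> c)" "x \<in> a"
      then show "tens C w x \<in> H" using gW unfolding W_def by blast
    qed
    then show "gen C (TT (gen C (b \<union> c)) a) \<subseteq> H" by (rule gen_least[OF H])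
    have bg: "b \<subseteq> gen C (b \<union> c)" "c \<subseteq> gen C (b \<union> c)" using gen_incl[of "b \<union> c"] by auto
    have "gen C (TT b a) \<subseteq> gen C (TT (gen C (b \<union> c)) a)" "gen C (TT c a) \<subseteq> gen C (TT (gen C (b \<union> c)) a)"
      using gen_mono[OF TT_mono[OF bg(1) subset_refl]] gen_mono[OF TT_mono[OF bg(2) subset_refl]] by auto
    then have "gen C (TT b a) \<union> gen C (TT c a) \<subseteq> gen C (TT (gen C (b \<union> c)) a)" by blast
    then show "H \<subseteq> gen C (TT (gen C (b \<union> c)) a)" unfolding H_def by (rule gen_least[OF g1])
  qed
  then show ?thesis unfolding H_def .
qed




lemma comm_isob: assumes "tensor_commutative C" "x \<in> Ob C" "y \<in> Ob C"
  shows "isob (tens C x y) (tens C y x)"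
proof -
  obtain \<gamma> where "\<forall>x\<in>Ob C. \<forall>y\<in>Ob C. iso C (\<gamma> x y) (tens C x y) (tens C y x)"
    using assms(1) unfolding tensor_commutative_def by blast
  then show ?thesis unfolding isob_def using assms(2,3) by blast
qed

lemma key_P: assumes hyp: "tensor_commutative C \<or> (\<exists>c\<in>Ob C. \<forall>D. thick C D \<and> c \<in> D \<longrightarrow> D = Ob C)"
  and x: "x \<in> Ob C" and y: "y \<in> Ob C"
  shows "\<exists>c0\<in>Ob C. \<forall>v\<in>Ob C. tens C (tens C x v) y \<in> gen C {tens C (tens C x c0) y}"
proof (cases "tensor_commutative C")
  case True
  define e0 where "e0 = tens C (tens C x (unit C)) y"
  have e0O: "e0 \<in> Ob C" unfolding e0_def using tens_ob x y unit_ob by blast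
  have E: "thick_tensor_ideal C (gen C {e0})" using gen_ttid e0O by blast
  have "e0 \<in> gen C {e0}" using gen_incl by blast
  then have xy: "tens C x y \<in> gen C {e0}"
    using isob_closed[OF ttidD[OF E] _ isob_tensl[OF isob_runit[OF x] y]] unfolding e0_def by blast
  have "tens C (tens C x v) y \<in> gen C {e0}" if v: "v \<in> Ob C" for v
  proof -
    have 1: "tens C (tens C x y) v \<in> gen C {e0}" using ttid_tl[OF E xy v] .
    have 2: "tens C x (tens C y v) \<in> gen C {e0}" using isob_closed[OF ttidD[OF E] 1 isob_assoc[OF x y v]] .
    have 3: "tens C x (tens C v y) \<in> gen C {e0}"
      using isob_closed[OF ttidD[OF E] 2 isob_tensr[OF x comm_isob[OF True y v]]] .
    show ?thesis using isob_closed[OF ttidD[OF E] 3 isob_assoc'[OF x v y]] .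
  qed
  then show ?thesis unfolding e0_def using unit_ob by blast
next
  case False
  then obtain c where c: "c \<in> Ob C" and gen_c: "\<And>D. thick C D \<Longrightarrow> c \<in> D \<Longrightarrow> D = Ob C" using hyp by blast
  define E where "E = gen C {tens C (tens C x c) y}"
  have e0O: "tens C (tens C x c) y \<in> Ob C" using tens_ob x y c by blast
  have E: "thick_tensor_ideal C E" unfolding E_def using gen_ttid e0O by blast
  have P: "pres (\<lambda>v. tens C (tens C x v) y)"
    using pres_comp[OF pres_tl[OF x] pres_tr[OF y]] by simp
  have T: "thick C {w\<in>Ob C. \<forall>a\<in>{0::nat}. (\<lambda>a v. tens C (tens C x v) y) a w \<in> E}"
  proof (rule pre_thick[OF ttidD[OF E]])
    show "pres ((\<lambda>a v. tens C (tens C x v) y) a)" if "a \<in> {0::nat}" for a using P by simp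
    show "c \<in> Ob C" by (rule c)
    show "(\<lambda>a v. tens C (tens C x v) y) a c \<in> E" if "a \<in> {0::nat}" for a
      unfolding E_def using gen_incl[of "{tens C (tens C x c) y}"] by simp
  qed
  then have T': "thick C {w\<in>Ob C. tens C (tens C x w) y \<in> E}" by simp
  moreover have "c \<in> {w\<in>Ob C. tens C (tens C x w) y \<in> E}"
    using c gen_incl unfolding E_def by blast
  ultimately have "{w\<in>Ob C. tens C (tens C x w) y \<in> E} = Ob C" using gen_c by blast
  then have "\<forall>v\<in>Ob C. tens C (tens C x v) y \<in> E" by blast
  then show ?thesis unfolding E_def using c by blast
qed

lemma prod_principal: assumes hyp: "tensor_commutative C \<or> (\<exists>c\<in>Ob C. \<forall>D. thick C D \<and> c \<in> D \<longrightarrow> D = Ob C)"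
  and x: "x \<in> Ob C" and y: "y \<in> Ob C"
  shows "\<exists>w\<in>Ob C. gen C (TT (gen C {x}) (gen C {y})) = gen C {w}"
proof -
  obtain c0 where c0: "c0 \<in> Ob C" and P: "\<And>v. v \<in> Ob C \<Longrightarrow> tens C (tens C x v) y \<in> gen C {tens C (tens C x c0) y}"
    using key_P[OF hyp x y] by blast
  define e0 where "e0 = tens C (tens C x c0) y"
  have e0O: "e0 \<in> Ob C" unfolding e0_def using tens_ob x y c0 by blast
  define E where "E = gen C {e0}"
  have E: "thick_tensor_ideal C E" unfolding E_def using gen_ttid e0O by blast
  have P': "\<And>v. v \<in> Ob C \<Longrightarrow> tens C (tens C x v) y \<in> E" using P unfolding E_def e0_def .
  have gx: "thick_tensor_ideal C (gen C {x})" using gen_ttid x by blast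
  have gy: "thick_tensor_ideal C (gen C {y})" using gen_ttid y by blast
  have gxO: "gen C {x} \<subseteq> Ob C" and gyO: "gen C {y} \<subseteq> Ob C" using gen_sub x y by auto
  have TO: "TT (gen C {x}) (gen C {y}) \<subseteq> Ob C" using TT_ob[OF gxO gyO] .
  have g1: "thick_tensor_ideal C (gen C (TT (gen C {x}) (gen C {y})))" using gen_ttid[OF TO] .
  have "E \<subseteq> gen C (TT (gen C {x}) (gen C {y}))"
  proof -
    have "tens C x c0 \<in> gen C {x}" using ttid_tl[OF gx _ c0] gen_incl by blast
    moreover have "y \<in> gen C {y}" using gen_incl by blast
    ultimately have "e0 \<in> TT (gen C {x}) (gen C {y})" unfolding e0_def by (rule TT_I)
    then have "{e0} \<subseteq> gen C (TT (gen C {x}) (gen C {y}))" using gen_incl by blast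
    then show ?thesis unfolding E_def by (rule gen_least[OF g1])
  qed
  moreover have "gen C (TT (gen C {x}) (gen C {y})) \<subseteq> E"
  proof -
    define A1 where "A1 = {tens C x u | u. u \<in> Ob C}"
    have A1O: "A1 \<subseteq> Ob C" unfolding A1_def using tens_ob x by blast
    define V where "V = {w\<in>Ob C. \<forall>a\<in>A1. tens C a w \<in> E}"
    have V: "thick_tensor_ideal C V" unfolding V_def
    proof (rule Wl[OF E A1O y])
      show "tens C a y \<in> E" if "a \<in> A1" for a using that P' unfolding A1_def by blast
      show "tens C a (tens C w u) \<in> E" if "w \<in> Ob C" "u \<in> Ob C" "\<forall>a\<in>A1. tens C a w \<in> E" "a \<in> A1" for w u a
      proof -
        have aO: "a \<in> Ob C" using that(4) A1O by blast
        have "tens C a w \<in> E" using that(3,4) by blast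
        then have "tens C (tens C a w) u \<in> E" using ttid_tl[OF E _ that(2)] by blast
        then show ?thesis using isob_closed[OF ttidD[OF E] _ isob_assoc[OF aO that(1,2)]] by blast
      qed
      show "tens C a (tens C u' w) \<in> E" if tw: "w \<in> Ob C" and tu: "u' \<in> Ob C" and th: "\<forall>a\<in>A1. tens C a w \<in> E" and ta: "a \<in> A1" for w u' a
      proof -
        obtain u where u: "u \<in> Ob C" "a = tens C x u" using ta unfolding A1_def by blast
        have "tens C x (tens C u u') \<in> A1" unfolding A1_def using tens_ob[OF u(1) tu] by blast
        then have 1: "tens C (tens C x (tens C u u')) w \<in> E" using th by blast
        have 2: "tens C (tens C (tens C x u) u') w \<in> E"
          using isob_closed[OF ttidD[OF E] 1 isob_tensl[OF isob_assoc'[OF x u(1) tu] tw]] .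
        have 3: "tens C (tens C x u) (tens C u' w) \<in> E"
          using isob_closed[OF ttidD[OF E] 2 isob_assoc[OF tens_ob[OF x u(1)] tu tw]] .
        then show ?thesis using u(2) by simp
      qed
    qed
    have "y \<in> V" unfolding V_def A1_def using y P' by blast
    then have gyV: "gen C {y} \<subseteq> V" using gen_least[OF V] by blast
    have xv: "tens C x v \<in> E" if v: "v \<in> gen C {y}" for v
    proof -
      have vO: "v \<in> Ob C" using v gyO by blast
      have "tens C x (unit C) \<in> A1" unfolding A1_def using unit_ob by blast
      then have "tens C (tens C x (unit C)) v \<in> E" using gyV v unfolding V_def by blast
      then show ?thesis using isob_closed[OF ttidD[OF E] _ isob_tensl[OF isob_runit[OF x] vO]] by blast
    qed
    define W where "W = {w\<in>Ob C. \<forall>v\<in>gen C {y}. tens C w v \<in> E}"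
    have W: "thick_tensor_ideal C W" unfolding W_def
    proof (rule Wr[OF E gyO x])
      show "tens C x v \<in> E" if "v \<in> gen C {y}" for v using xv that by blast
      show "tens C (tens C w u) v \<in> E" if "w \<in> Ob C" "u \<in> Ob C" "\<forall>a\<in>gen C {y}. tens C w a \<in> E" "v \<in> gen C {y}" for w u v
      proof -
        have "tens C u v \<in> gen C {y}" using ttid_tr[OF gy that(2,4)] .
        then have "tens C w (tens C u v) \<in> E" using that(3) by blast
        then show ?thesis using isob_closed[OF ttidD[OF E] _ isob_assoc'[OF that(1,2)]] that(4) gyO by blast
      qed
      show "tens C (tens C u w) v \<in> E" if "w \<in> Ob C" "u \<in> Ob C" "\<forall>a\<in>gen C {y}. tens C w a \<in> E" "v \<in> gen C {y}" for w u v
      proof -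
        have "tens C w v \<in> E" using that(3,4) by blast
        then have "tens C u (tens C w v) \<in> E" using ttid_tr[OF E that(2)] by blast
        then show ?thesis using isob_closed[OF ttidD[OF E] _ isob_assoc'[OF that(2,1)]] that(4) gyO by blast
      qed
    qed
    have "x \<in> W" unfolding W_def using x xv by blast
    then have gxW: "gen C {x} \<subseteq> W" using gen_least[OF W] by blast
    have "TT (gen C {x}) (gen C {y}) \<subseteq> E"
    proof (rule TT_sub)
      fix w v assume "w \<in> gen C {x}" "v \<in> gen C {y}"
      then show "tens C w v \<in> E" using gxW unfolding W_def by blast
    qed
    then show ?thesis by (rule gen_least[OF E])
  qed
  ultimately show ?thesis unfolding E_def using e0O by blast
qed




lemma sup_principals: assumes D: "thick_tensor_ideal C D"
  shows "is_sup LL (\<subseteq>) ((\<lambda>x. gen C {x}) ` D) D"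
  unfolding is_sup_def
proof (intro conjI ballI impI)
  show "D \<in> LL" using D by blast
  show "a \<subseteq> D" if "a \<in> (\<lambda>x. gen C {x}) ` D" for a
  proof -
    obtain x where "x \<in> D" "a = gen C {x}" using \<open>a \<in> (\<lambda>x. gen C {x}) ` D\<close> by blast
    then show ?thesis using gen_least[OF D, of "{x}"] by blast
  qed
  show "D \<subseteq> u" if "u \<in> LL" "\<forall>a\<in>(\<lambda>x. gen C {x}) ` D. a \<subseteq> u" for u
  proof
    fix x assume "x \<in> D"
    then have "gen C {x} \<subseteq> u" using that(2) by blast
    then show "x \<in> u" using gen_incl[of "{x}"] by blast
  qed
qed

lemma mul_eq': "a \<in> LL \<Longrightarrow> b \<in> LL \<Longrightarrow> gen C (prod_cls C a b) = gen C (TT a b)"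
  by (rule mul_eq) (simp_all add: ttid_sub)

lemma mul_LL: "a \<in> LL \<Longrightarrow> b \<in> LL \<Longrightarrow> gen C (TT a b) \<in> LL"
  using gen_ttid[OF TT_ob[OF ttid_sub ttid_sub]] by simp

lemma compact_iff: "thick_tensor_ideal C D \<Longrightarrow> compact_el LL (\<subseteq>) D \<longleftrightarrow> (\<exists>x\<in>Ob C. D = gen C {x})"
proof
  assume "compact_el LL (\<subseteq>) D" then show "\<exists>x\<in>Ob C. D = gen C {x}" by (rule compact_principal)
next
  assume "\<exists>x\<in>Ob C. D = gen C {x}"
  then obtain x where x: "x \<in> Ob C" "D = gen C {x}" by blast
  show "compact_el LL (\<subseteq>) D" unfolding x(2) by (rule principal_compact[OF x(1)])
qed

lemma main_loc: assumes hyp: "tensor_commutative C \<or> (\<exists>c\<in>Ob C. \<forall>D. thick C D \<and> c \<in> D \<longrightarrow> D = Ob C)"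
  shows "ideal_lattice LL (\<subseteq>) (\<lambda>D1 D2. gen C (prod_cls C D1 D2)) \<and>
         (\<forall>D. thick_tensor_ideal C D \<longrightarrow>
           (compact_el LL (\<subseteq>) D \<longleftrightarrow> (\<exists>x\<in>Ob C. D = gen C {x})))"
proof (intro conjI)
  show "\<forall>D. thick_tensor_ideal C D \<longrightarrow> (compact_el LL (\<subseteq>) D \<longleftrightarrow> (\<exists>x\<in>Ob C. D = gen C {x}))"
    using compact_iff by (intro allI impI)
  show "ideal_lattice LL (\<subseteq>) (\<lambda>D1 D2. gen C (prod_cls C D1 D2))"
    unfolding ideal_lattice_def
  proof (intro conjI)
    show "\<forall>a\<in>LL. a \<subseteq> a" by blast
    show "\<forall>a\<in>LL. \<forall>b\<in>LL. a \<subseteq> b \<and> b \<subseteq> a \<longrightarrow> a = b" by blast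
    show "\<forall>a\<in>LL. \<forall>b\<in>LL. \<forall>c\<in>LL. a \<subseteq> b \<and> b \<subseteq> c \<longrightarrow> a \<subseteq> c" by blast
    show "\<forall>a\<in>LL. \<forall>b\<in>LL. gen C (prod_cls C a b) \<in> LL"
    proof (intro ballI)
      fix a b assume a: "a \<in> LL" and b: "b \<in> LL"
      show "gen C (prod_cls C a b) \<in> LL" unfolding mul_eq'[OF a b] by (rule mul_LL[OF a b])
    qed
    show "\<forall>a\<in>LL. \<forall>b\<in>LL. \<forall>c\<in>LL. gen C (prod_cls C (gen C (prod_cls C a b)) c) =
        gen C (prod_cls C a (gen C (prod_cls C b c)))"
    proof (intro ballI)
      fix a b c assume abc: "a \<in> LL" "b \<in> LL" "c \<in> LL"
      have ab: "gen C (TT a b) \<in> LL" using mul_LL[OF abc(1,2)] .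
      have bc: "gen C (TT b c) \<in> LL" using mul_LL[OF abc(2,3)] .
      have 1: "gen C (prod_cls C (gen C (prod_cls C a b)) c) = gen C (TT (gen C (TT a b)) c)"
        unfolding mul_eq'[OF abc(1,2)] mul_eq'[OF ab abc(3)] ..
      have 2: "gen C (prod_cls C a (gen C (prod_cls C b c))) = gen C (TT a (gen C (TT b c)))"
        unfolding mul_eq'[OF abc(2,3)] mul_eq'[OF abc(1) bc] ..
      have 3: "gen C (TT (gen C (TT a b)) c) = gen C (TT a (gen C (TT b c)))"
        using assoc_mul abc by blast
      show "gen C (prod_cls C (gen C (prod_cls C a b)) c) = gen C (prod_cls C a (gen C (prod_cls C b c)))"
        unfolding 1 2 3 ..
    qed
    show "\<forall>A. A \<subseteq> LL \<longrightarrow> (\<exists>s. is_sup LL (\<subseteq>) A s)"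
    proof (intro allI impI)
      fix A assume "A \<subseteq> LL" then show "\<exists>s. is_sup LL (\<subseteq>) A s" using is_sup_gen by blast
    qed
    show "\<forall>a\<in>LL. \<exists>A. A \<subseteq> {c. compact_el LL (\<subseteq>) c} \<and> is_sup LL (\<subseteq>) A a"
    proof
      fix a assume a: "a \<in> LL"
      have "(\<lambda>x. gen C {x}) ` a \<subseteq> {c. compact_el LL (\<subseteq>) c}"
      proof
        fix d assume "d \<in> (\<lambda>x. gen C {x}) ` a"
        then obtain x where x: "x \<in> a" "d = gen C {x}" by blast
        have "x \<in> Ob C" using x(1) a ttid_sub by blast
        then show "d \<in> {c. compact_el LL (\<subseteq>) c}" unfolding x(2) using principal_compact by blast
      qed
      moreover have "is_sup LL (\<subseteq>) ((\<lambda>x. gen C {x}) ` a) a" using sup_principals a by blast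
      ultimately show "\<exists>A. A \<subseteq> {c. compact_el LL (\<subseteq>) c} \<and> is_sup LL (\<subseteq>) A a" by blast
    qed
    show "\<forall>a\<in>LL. \<forall>b\<in>LL. \<forall>c\<in>LL. \<forall>s. is_sup LL (\<subseteq>) {b, c} s \<longrightarrow>
        is_sup LL (\<subseteq>) {gen C (prod_cls C a b), gen C (prod_cls C a c)} (gen C (prod_cls C a s)) \<and>
        is_sup LL (\<subseteq>) {gen C (prod_cls C b a), gen C (prod_cls C c a)} (gen C (prod_cls C s a))"
    proof (intro ballI allI impI conjI)
      fix a b c s assume abc: "a \<in> LL" "b \<in> LL" "c \<in> LL" and s: "is_sup LL (\<subseteq>) {b, c} s"
      have bcL: "{b, c} \<subseteq> LL" using abc by blast
      have s_eq: "s = gen C (b \<union> c)" using is_sup_eq[OF bcL s] by simp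
      have bcO: "b \<union> c \<subseteq> Ob C" using ttid_sub[of b] ttid_sub[of c] abc(2,3) by simp
      have sL: "gen C (b \<union> c) \<in> LL" using gen_ttid[OF bcO] by simp
      have m1: "gen C (prod_cls C a s) = gen C (gen C (prod_cls C a b) \<union> gen C (prod_cls C a c))"
        unfolding s_eq mul_eq'[OF abc(1) sL] mul_eq'[OF abc(1,2)] mul_eq'[OF abc(1,3)]
        using distrib_l[of a b c] abc by simp
      have m2: "gen C (prod_cls C s a) = gen C (gen C (prod_cls C b a) \<union> gen C (prod_cls C c a))"
        unfolding s_eq mul_eq'[OF sL abc(1)] mul_eq'[OF abc(2,1)] mul_eq'[OF abc(3,1)]
        using distrib_r[of a b c] abc by simp
      have L1: "{gen C (prod_cls C a b), gen C (prod_cls C a c)} \<subseteq> LL"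
        unfolding mul_eq'[OF abc(1,2)] mul_eq'[OF abc(1,3)] using mul_LL[OF abc(1,2)] mul_LL[OF abc(1,3)] by simp
      have L2: "{gen C (prod_cls C b a), gen C (prod_cls C c a)} \<subseteq> LL"
        unfolding mul_eq'[OF abc(2,1)] mul_eq'[OF abc(3,1)] using mul_LL[OF abc(2,1)] mul_LL[OF abc(3,1)] by simp
      show "is_sup LL (\<subseteq>) {gen C (prod_cls C a b), gen C (prod_cls C a c)} (gen C (prod_cls C a s))"
        unfolding m1 using is_sup_gen[OF L1] by simp
      show "is_sup LL (\<subseteq>) {gen C (prod_cls C b a), gen C (prod_cls C c a)} (gen C (prod_cls C s a))"
        unfolding m2 using is_sup_gen[OF L2] by simp
    qed
    have OL: "Ob C \<in> LL" using Ob_ttid by blast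
    have supO: "is_sup LL (\<subseteq>) LL (Ob C)" unfolding is_sup_def
    proof (intro conjI ballI impI)
      show "Ob C \<in> LL" by (rule OL)
      show "a \<subseteq> Ob C" if "a \<in> LL" for a using that ttid_sub by blast
      show "Ob C \<subseteq> u" if "u \<in> LL" "\<forall>a\<in>LL. a \<subseteq> u" for u using that OL by blast
    qed
    have cO: "compact_el LL (\<subseteq>) (Ob C)" using principal_compact[OF unit_ob] unfolding gen_unit .
    have uO: "\<forall>a\<in>LL. gen C (prod_cls C (Ob C) a) = a \<and> gen C (prod_cls C a (Ob C)) = a"
    proof
      fix a assume a: "a \<in> LL"
      have 1: "gen C (prod_cls C (Ob C) a) = a" unfolding mul_eq'[OF OL a] using unit_left[of a] a by simp
      have 2: "gen C (prod_cls C a (Ob C)) = a" unfolding mul_eq'[OF a OL] using unit_right[of a] a by simp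
      show "gen C (prod_cls C (Ob C) a) = a \<and> gen C (prod_cls C a (Ob C)) = a" using 1 2 by (rule conjI)
    qed
    show "\<exists>t. is_sup LL (\<subseteq>) LL t \<and> compact_el LL (\<subseteq>) t \<and>
        (\<forall>a\<in>LL. gen C (prod_cls C t a) = a \<and> gen C (prod_cls C a t) = a)"
      using supO cO uO by (intro exI[of _ "Ob C"] conjI)
    show "\<forall>a b. compact_el LL (\<subseteq>) a \<longrightarrow> compact_el LL (\<subseteq>) b \<longrightarrow>
        compact_el LL (\<subseteq>) (gen C (prod_cls C a b))"
    proof (intro allI impI)
      fix a b assume ca: "compact_el LL (\<subseteq>) a" and cb: "compact_el LL (\<subseteq>) b"
      obtain x where x: "x \<in> Ob C" "a = gen C {x}" using compact_principal[OF ca] by blast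
      obtain y where y: "y \<in> Ob C" "b = gen C {y}" using compact_principal[OF cb] by blast
      have aL: "a \<in> LL" unfolding x(2) using gen_ttid[of "{x}"] x(1) by simp
      have bL: "b \<in> LL" unfolding y(2) using gen_ttid[of "{y}"] y(1) by simp
      obtain w where w: "w \<in> Ob C" "gen C (TT (gen C {x}) (gen C {y})) = gen C {w}"
        using prod_principal[OF hyp x(1) y(1)] by blast
      have "gen C (prod_cls C a b) = gen C (TT a b)" by (rule mul_eq'[OF aL bL])
      also have "\<dots> = gen C {w}" using w(2) unfolding x(2) y(2) .
      finally have "gen C (prod_cls C a b) = gen C {w}" .
      then show "compact_el LL (\<subseteq>) (gen C (prod_cls C a b))" using principal_compact[OF w(1)] by simp
    qed
  qed
qed

end

theorem mainTheorem14:
  fixes C :: "('o, 'm) ttcat"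
  assumes "tensor_triangulated C"
    and "tensor_commutative C \<or>
         (\<exists>c\<in>Ob C. \<forall>D. thick C D \<and> c \<in> D \<longrightarrow> D = Ob C)"
  shows "ideal_lattice {D. thick_tensor_ideal C D} (\<subseteq>) (\<lambda>D1 D2. gen C (prod_cls C D1 D2)) \<and>
         (\<forall>D. thick_tensor_ideal C D \<longrightarrow>
           (compact_el {D. thick_tensor_ideal C D} (\<subseteq>) D \<longleftrightarrow> (\<exists>x\<in>Ob C. D = gen C {x})))"
proof -
  interpret ttc C by (rule ttc.intro) (rule assms(1))
  show ?thesis using main_loc[OF assms(2)] .
qed


end
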